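(* Let $Q_0\subset\mathbb{R}^d$ be a cube and $k \in \mathbb{N} \cap [1,d]$. There is a constant $C>0$ such that if $u \in BMO^k(Q_0)$, then for any $k$-dimensional affine plane $H_k$ parallel to $Q_0$, $u|_{Q_0\cap H_k} \in BMO(Q_0\cap H_k)$ and $$\|u|_{Q_0\cap H_k}\|_{BMO(Q_0\cap H_k)} \leq C\|u\|_{BMO^k(Q_0)}.$$ In the case $k=d$, one has $$\frac{1}{C} \|u\|_{BMO^d(Q_0)} \leq \|u\|_{BMO(Q_0)} \leq C \|u\|_{BMO^d(Q_0)},$$ so that $BMO^d(Q_0) = BMO(Q_0)$.
   Context: For $\beta\in(0,d]$ and $E\subset\mathbb{R}^d$, $\mathcal{H}^{\beta}_{\infty}(E)= \inf \{\sum_{i} \omega_\beta r_i^\beta : E \subset \bigcup_{i} B(x_i,r_i) \}$, $\omega_\beta= \pi^{\beta/2}/\Gamma(\beta/2+1)$. A function $f$ is $\mathcal{H}^\beta_\infty$-quasicontinuous if for every $\epsilon>0$ there is an open $O$ with $\mathcal{H}^\beta_\infty(O)<\epsilon$ and $f|_{O^c}$ continuous. Choquet integral: $\int_A f\,d\mathcal{H}^\beta_\infty=\int_0^\infty \mathcal{H}^\beta_\infty(\{x\in A: f(x)>t\})\,dt$ for $f\ge0$. $L^1(Q_0;\mathcal{H}^\beta_\infty)$: quasicontinuous $f$ with $\int_{Q_0}|f|\,d\mathcal{H}^\beta_\infty<\infty$. $\|u\|_{BMO^{\beta}(Q_0)}= \sup_{Q} \inf_{c \in \mathbb{R}} l(Q)^{-\beta}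 \int_{Q} |u-c| \,d\mathcal{H}^{\beta}_\infty$ over finite subcubes $Q\subset Q_0$ with sides parallel to those of $Q_0$ ($l(Q)$ = side length), and $BMO^\beta(Q_0)$ is the set of $u\in L^1(Q_0;\mathcal{H}^\beta_\infty)$ where it is finite. A $k$-dimensional affine plane parallel to $Q_0$ is a translate of the span of $k$ of the edge directions of $Q_0$. $BMO(Q_0\cap H_k)$ is the classical John–Nirenberg space: functions $v$ locally integrable with respect to the $k$-dimensional Hausdorff measure $\mathcal{H}^k$ on $Q_0\cap H_k$ with $\|v\|_{BMO(Q_0\cap H_k)}=\sup_{Q'}\frac{1}{\mathcal{H}^k(Q')}\int_{Q'}|v-v_{Q'}|\,d\mathcal{H}^k<\infty$, the supremum over $k$-dimensional cubes $Q'\subset Q_0\cap H_k$ with sides parallel to edges of $Q_0$, $v_{Q'}$ the $\mathcal{H}^k$-average of $v$ on $Q'$; for $k=d$ this is the usual $BMO(Q_0)$ with Lebesgue measure. *)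

theory Defs
  imports "HOL-Analysis.Analysis"
begin

definition omega :: "real \<Rightarrow> real" where
  "omega \<beta> = pi powr (\<beta> / 2) / Gamma (\<beta> / 2 + 1)"

definition hcontent :: "real \<Rightarrow> 'a::metric_space set \<Rightarrow> ennreal" where
  "hcontent \<beta> E =
     (INF p \<in> {(x, r). (\<forall>i::nat. 0 \<le> r i) \<and> E \<subseteq> (\<Union>i. ball (x i) (r i))}.
        (\<Sum>i. ennreal (omega \<beta> * (snd p i) powr \<beta>)))"

definition hc_quasicontinuous_on :: "real \<Rightarrow> 'a::metric_space set \<Rightarrow> ('a \<Rightarrow> real) \<Rightarrow> bool" where
  "hc_quasicontinuous_on \<beta> A f \<longleftrightarrow>
     (\<forall>\<epsilon>>0. \<exists>U. open U \<and> hcontent \<beta> U < ennreal \<epsilon> \<and> continuous_on (A - U) f)"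

definition choquet :: "real \<Rightarrow> 'a::metric_space set \<Rightarrow> ('a \<Rightarrow> real) \<Rightarrow> ennreal" where
  "choquet \<beta> A f = set_nn_integral lborel {0<..} (\<lambda>t. hcontent \<beta> {x \<in> A. f x > t})"

definition L1_content :: "real \<Rightarrow> 'a::metric_space set \<Rightarrow> ('a \<Rightarrow> real) \<Rightarrow> bool" where
  "L1_content \<beta> A u \<longleftrightarrow> hc_quasicontinuous_on \<beta> A u \<and> choquet \<beta> A (\<lambda>x. \<bar>u x\<bar>) < top"

definition cube :: "real^'n \<Rightarrow> real \<Rightarrow> (real^'n) set" where
  "cube c r = {x. \<forall>i. c$i \<le> x$i \<and> x$i \<le> c$i + r}"

definition subcube_data :: "(real^'n) set \<Rightarrow> ((real^'n) \<times> real) set" where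
  "subcube_data Q0 = {(c, r). 0 < r \<and> cube c r \<subseteq> Q0}"

definition subcubes :: "(real^'n) set \<Rightarrow> (real^'n) set set" where
  "subcubes Q0 = (\<lambda>(c, r). cube c r) ` subcube_data Q0"

definition bmo_content_norm :: "real \<Rightarrow> (real^'n) set \<Rightarrow> (real^'n \<Rightarrow> real) \<Rightarrow> ennreal" where
  "bmo_content_norm \<beta> Q0 u =
     (SUP p \<in> subcube_data Q0. INF c' \<in> (UNIV :: real set).
        ennreal ((snd p) powr (- \<beta>)) * choquet \<beta> (cube (fst p) (snd p)) (\<lambda>x. \<bar>u x - c'\<bar>))"

definition BMO_content :: "real \<Rightarrow> (real^'n) set \<Rightarrow> (real^'n \<Rightarrow> real) set" where
  "BMO_content \<beta> Q0 = {u. L1_content \<beta> Q0 u \<and> bmo_content_norm \<beta> Q0 u < top}"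

definition bmo_norm :: "'a measure \<Rightarrow> 'a set set \<Rightarrow> ('a \<Rightarrow> real) \<Rightarrow> ennreal" where
  "bmo_norm M Qs v =
     (SUP Q \<in> Qs. ennreal ((LINT x:Q|M. \<bar>v x - (LINT y:Q|M. v y) / measure M Q\<bar>) / measure M Q))"

definition BMO_classical :: "'a measure \<Rightarrow> 'a set set \<Rightarrow> ('a \<Rightarrow> real) set" where
  "BMO_classical M Qs = {v. (\<forall>Q\<in>Qs. set_integrable M Q v) \<and> bmo_norm M Qs v < top}"

definition plane :: "'n set \<Rightarrow> real^'n \<Rightarrow> (real^'n) set" where
  "plane S a = {x. \<forall>i. i \<notin> S \<longrightarrow> x$i = a$i}"

definition plane_cube :: "'n set \<Rightarrow> real^'n \<Rightarrow> real \<Rightarrow> (real^'n) set" where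
  "plane_cube S c r = {x. (\<forall>i\<in>S. c$i \<le> x$i \<and> x$i \<le> c$i + r) \<and> (\<forall>i. i \<notin> S \<longrightarrow> x$i = c$i)}"

definition plane_cubes :: "'n set \<Rightarrow> real^'n \<Rightarrow> (real^'n) set \<Rightarrow> (real^'n) set set" where
  "plane_cubes S a Q0 =
     {plane_cube S c r | c r. 0 < r \<and> (\<forall>i. i \<notin> S \<longrightarrow> c$i = a$i) \<and> plane_cube S c r \<subseteq> Q0}"

text \<open>k-dimensional Hausdorff measure on the axis-parallel plane (plane S a): the (completed)
  image of k-dimensional Lebesgue measure under the isometric embedding of R^S.\<close>
definition plane_measure :: "'n set \<Rightarrow> real^'n \<Rightarrow> (real^'n) measure" where
  "plane_measure S a =
     completion (distr (Pi\<^sub>M S (\<lambda>_. lborel)) borel (\<lambda>y. \<chi> i. if i \<in> S then y i else a$i))"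

end

theory Submission
  imports Defs
begin


lemma le_mult_INF_ennreal:
  fixes c :: ennreal
  assumes "0 < c" "c < top" "\<And>i. i \<in> A \<Longrightarrow> x \<le> c * f i"
  shows "x \<le> c * (INF i\<in>A. f i)"
proof -
  have "x / c \<le> (INF i\<in>A. f i)"
  proof (rule INF_greatest)
    fix i assume "i \<in> A"
    then have "x \<le> c * f i" using assms by auto
    then show "x / c \<le> f i"
      using assms divide_le_posI_ennreal by blast
  qed
  then show ?thesis
    using assms by (metis (no_types, opaque_lifting) ennreal_times_divide mult.commute
    mult_divide_eq_ennreal mult_right_mono not_less_zero top.extremum_strict zero_le)
qed

lemma hc_mono: "A \<subseteq> B \<Longrightarrow> hcontent \<beta> A \<le> hcontent \<beta> B"
  unfolding hcontent_def by (rule INF_superset_mono) auto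

lemma hc_le_cover:
  assumes "\<And>i. 0 \<le> r i" "E \<subseteq> (\<Union>i. ball (x i) (r i))"
  shows "hcontent \<beta> E \<le> (\<Sum>i. ennreal (omega \<beta> * r i powr \<beta>))"
  unfolding hcontent_def
  by (rule INF_lower2[of "(x,r)"]) (use assms in auto)

lemma emeasure_le_hc:
  fixes M :: "'a::metric_space measure"
  assumes sp: "\<And>x r. ball x r \<in> sets M"
    and E: "E \<in> sets M" and K: "0 < K"
    and ball: "\<And>x r. 0 \<le> r \<Longrightarrow> emeasure M (ball x r) \<le> ennreal K * ennreal (omega \<beta> * r powr \<beta>)"
  shows "emeasure M E \<le> ennreal K * hcontent \<beta> E"
  unfolding hcontent_def
proof (rule le_mult_INF_ennreal)
  show "0 < ennreal K" "ennreal K < top" using K by auto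
  fix p :: "(nat \<Rightarrow> 'a) \<times> (nat \<Rightarrow> real)" assume p: "p \<in> {(x, r). (\<forall>i. 0 \<le> r i) \<and> E \<subseteq> (\<Union>i. ball (x i) (r i))}"
  obtain x r where pxr: "p = (x, r)" by fastforce
  have r: "\<And>i. 0 \<le> r i" and cov: "E \<subseteq> (\<Union>i. ball (x i) (r i))" using p pxr by auto
  have "emeasure M E \<le> emeasure M (\<Union>i. ball (x i) (r i))"
  proof (rule emeasure_mono[OF cov])
    show "(\<Union>i. ball (x i) (r i)) \<in> sets M" by (simp add: countable_Un_Int(1) sp)
  qed
  also have "\<dots> \<le> (\<Sum>i. emeasure M (ball (x i) (r i)))"
    by (rule emeasure_subadditive_countably) (use sp in auto)
  also have "\<dots> \<le> (\<Sum>i. ennreal K * ennreal (omega \<beta> * r i powr \<beta>))"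
    by (intro suminf_le ball r) auto
  also have "\<dots> = ennreal K * (\<Sum>i. ennreal (omega \<beta> * r i powr \<beta>))"
    by (rule ennreal_suminf_cmult)
  finally show "emeasure M E \<le> ennreal K * (\<Sum>i. ennreal (omega \<beta> * snd p i powr \<beta>))"
    using pxr by simp
qed



lemma layer_cake:
  fixes M :: "'a measure" and f :: "'a \<Rightarrow> real"
  assumes f: "f \<in> borel_measurable M" and nn: "\<And>x. 0 \<le> f x"
    and A: "A \<in> sets M" and fin: "emeasure M A < \<infinity>"
  shows "(\<integral>\<^sup>+x. indicator A x * ennreal (f x) \<partial>M) =
         set_nn_integral lborel {0<..} (\<lambda>t. emeasure M {x \<in> A. f x > t})"
proof -
  define N where "N = density M (indicator A)"
  have sN: "sets N = sets M" "space N = space M" unfolding N_def by auto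
  have eN: "emeasure N X = emeasure M (A \<inter> X)" if "X \<in> sets M" for X
    unfolding N_def using A that by (rule emeasure_restricted)
  interpret N: finite_measure N
  proof (rule finite_measureI)
    have "emeasure N (space N) = emeasure M (A \<inter> space M)" using eN[of "space M"] sN by simp
    also have "\<dots> = emeasure M A" using A by (simp add: sets.Int_space_eq2)
    finally show "emeasure N (space N) \<noteq> \<infinity>" using fin by auto
  qed
  interpret P: pair_sigma_finite N lborel
    by (rule pair_sigma_finite.intro[OF N.sigma_finite_measure_axioms sigma_finite_lborel])
  define F where "F = (\<lambda>x t. indicator {(x, t). 0 < t \<and> t < f x} (x, t) :: ennreal)"
  have fN: "f \<in> borel_measurable N" using f by (simp add: measurable_cong_sets[OF sN(1) refl])
  have Fm: "(\<lambda>(x, y). F x y) \<in> borel_measurable (N \<Otimes>\<^sub>M lborel)"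
    unfolding F_def using fN by measurable
  have 1: "\<integral>\<^sup>+ t. \<integral>\<^sup>+ x. F x t \<partial>N \<partial>lborel = \<integral>\<^sup>+ x. integral\<^sup>N lborel (F x) \<partial>N"
    by (rule P.Fubini'[OF Fm])
  have 2: "integral\<^sup>N lborel (F x) = ennreal (f x)" for x
  proof -
    have "integral\<^sup>N lborel (F x) = \<integral>\<^sup>+ t. indicator {0<..<f x} t \<partial>lborel"
      unfolding F_def by (intro nn_integral_cong) (auto simp: indicator_def)
    also have "\<dots> = ennreal (f x)" using nn[of x] by simp
    finally show ?thesis .
  qed
  have 3: "\<integral>\<^sup>+ x. F x t \<partial>N = emeasure M {x \<in> A. f x > t} * indicator {0<..} t" for t
  proof (cases "0 < t")
    case True
    have "\<integral>\<^sup>+ x. F x t \<partial>N = \<integral>\<^sup>+ x. indicator {x\<in>space M. t < f x} x \<partial>N"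
      unfolding F_def using True sN by (intro nn_integral_cong) (auto simp: indicator_def)
    also have "\<dots> = emeasure N {x\<in>space M. t < f x}"
      using fN sN by (intro nn_integral_indicator) (simp add: measurable_cong_sets[OF sN(1) refl])
    also have "\<dots> = emeasure M (A \<inter> {x\<in>space M. t < f x})"
      using f by (intro eN) measurable
    also have "A \<inter> {x\<in>space M. t < f x} = {x \<in> A. f x > t}"
      using A sets.sets_into_space by auto
    finally show ?thesis using True by simp
  next
    case False
    then show ?thesis unfolding F_def by (simp add: indicator_def)
  qed
  have "(\<integral>\<^sup>+x. indicator A x * ennreal (f x) \<partial>M) = \<integral>\<^sup>+ x. ennreal (f x) \<partial>N"
    unfolding N_def using A f by (subst nn_integral_density) auto
  also have "\<dots> = \<integral>\<^sup>+ x. integral\<^sup>N lborel (F x) \<partial>N" using 2 by simp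
  also have "\<dots> = \<integral>\<^sup>+ t. \<integral>\<^sup>+ x. F x t \<partial>N \<partial>lborel" using 1 by simp
  also have "\<dots> = set_nn_integral lborel {0<..} (\<lambda>t. emeasure M {x \<in> A. f x > t})"
    using 3 by simp
  finally show ?thesis .
qed



lemma omega_pos: "0 < \<beta> \<Longrightarrow> 0 < omega \<beta>"
  unfolding omega_def by (intro divide_pos_pos Gamma_real_pos) auto

lemma cube_ball:
  fixes u v x :: "real^'n"
  assumes "x \<in> cbox u v" "\<And>i. v$i - u$i = s" "0 < s"
  shows "x \<in> ball u (2 * real CARD('n) * s)"
proof -
  have "dist u x = norm (x - u)" by (simp add: dist_norm norm_minus_commute)
  also have "\<dots> \<le> (\<Sum>i\<in>UNIV. \<bar>(x - u)$i\<bar>)" by (rule norm_le_l1_cart)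
  also have "\<dots> \<le> (\<Sum>i\<in>(UNIV::'n set). s)"
  proof (intro sum_mono)
    fix i :: 'n
    have "u$i \<le> x$i" "x$i \<le> v$i" using assms(1) by (auto simp: mem_box_cart)
    then show "\<bar>(x - u)$i\<bar> \<le> s" using assms(2)[of i] by auto
  qed
  also have "\<dots> = real CARD('n) * s" by simp
  also have "\<dots> < 2 * real CARD('n) * s" using assms by simp
  finally show ?thesis by simp
qed

lemma emeasure_box_cube:
  fixes u v :: "real^'n"
  assumes "\<And>i. v$i - u$i = s" "0 < s"
  shows "emeasure lborel (box u v) = ennreal (s ^ CARD('n))"
proof -
  have b: "\<And>b. b \<in> Basis \<Longrightarrow> (v - u) \<bullet> b = s"
    using assms by (auto simp: Basis_vec_def inner_axis)
  have "emeasure lborel (box u v) = ennreal (prod ((\<bullet>) (v - u)) Basis)"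
  proof (intro emeasure_lborel_box)
    fix c :: "real^'n" assume "c \<in> Basis"
    then have "v \<bullet> c - u \<bullet> c = s" using b by (simp add: inner_diff_left)
    then show "u \<bullet> c \<le> v \<bullet> c" using assms(2) by linarith
  qed
  also have "prod ((\<bullet>) (v - u)) Basis = (\<Prod>b\<in>(Basis::(real^'n) set). s)"
    using b by (intro prod.cong) auto
  also have "\<dots> = s ^ CARD('n)" by simp
  finally show ?thesis .
qed



lemma hc_le_lebesgue:
  fixes E :: "(real^'n) set" and a b :: "real^'n"
  assumes E: "E \<in> sets lebesgue" "E \<subseteq> cbox a b" and ab: "\<And>i. b$i - a$i = l" and l: "0 < l"
  shows "hcontent (real CARD('n)) E \<le>
    ennreal (omega (real CARD('n)) * (2 * real CARD('n)) ^ CARD('n)) * emeasure lebesgue E"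
proof -
  define d where "d = CARD('n)"
  have d0: "0 < d" unfolding d_def by simp
  define Kc where "Kc = omega (real d) * (2 * real d) ^ d"
  have Kc: "0 < Kc" unfolding Kc_def using d0 by (intro mult_pos_pos omega_pos) auto
  have Elm: "E \<in> lmeasurable"
    by (rule fmeasurableI2[OF lmeasurable_cbox E(2) E(1)])
  have "hcontent (real d) E \<le> ennreal Kc * emeasure lebesgue E"
  proof (rule ennreal_le_epsilon)
    fix e :: real assume e: "0 < e"
    have eKc: "0 < e / Kc" using e Kc by simp
    obtain D where D: "countable D" "\<And>K. K \<in> D \<Longrightarrow> K \<subseteq> cbox a b \<and> K \<noteq> {} \<and> (\<exists>c d. K = cbox c d)"
        "pairwise (\<lambda>A B. interior A \<inter> interior B = {}) D"
        "\<And>u v. cbox u v \<in> D \<Longrightarrow> \<exists>n. \<forall>i \<in> Basis. v \<bullet> i - u \<bullet> i = (b \<bullet> i - a \<bullet> i)/2^n"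
        "\<And>K. \<lbrakk>K \<in> D; box a b \<noteq> {}\<rbrakk> \<Longrightarrow> interior K \<noteq> {}"
        "E \<subseteq> \<Union>D" "\<Union>D \<in> lmeasurable" "measure lebesgue (\<Union>D) \<le> measure lebesgue E + e / Kc"
      by (rule measurable_outer_intervals_bounded[OF Elm E(2) eKc]) (rule that)
    have "\<forall>K\<in>D. \<exists>p. K = cbox (fst p) (fst (snd p)) \<and> 0 < snd (snd p) \<and>
               (\<forall>i. fst (snd p) $ i - fst p $ i = snd (snd p))"
    proof
      fix K assume K: "K \<in> D"
      then obtain u v where uv: "K = cbox u v" using D(2) by blast
      obtain n where n: "\<forall>i \<in> Basis. v \<bullet> i - u \<bullet> i = (b \<bullet> i - a \<bullet> i)/2^n"
        using D(4) K uv by blast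
      have "\<forall>i. v $ i - u $ i = l / 2^n"
      proof
        fix i :: 'n
        have "axis i 1 \<in> (Basis :: (real^'n) set)" by (auto simp: Basis_vec_def)
        then have "v \<bullet> axis i 1 - u \<bullet> axis i 1 = (b \<bullet> axis i 1 - a \<bullet> axis i 1)/2^n"
          using n by blast
        then show "v $ i - u $ i = l / 2^n" using ab[of i]
          by (simp add: inner_axis)
      qed
      then show "\<exists>p. K = cbox (fst p) (fst (snd p)) \<and> 0 < snd (snd p) \<and>
               (\<forall>i. fst (snd p) $ i - fst p $ i = snd (snd p))"
        using uv l by (intro exI[of _ "(u, v, l / 2^n)"]) auto
    qed
    then obtain P where P: "\<And>K. K \<in> D \<Longrightarrow> K = cbox (fst (P K)) (fst (snd (P K))) \<and> 0 < snd (snd (P K)) \<and>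
               (\<forall>i. fst (snd (P K)) $ i - fst (P K) $ i = snd (snd (P K)))"
      by metis
    define lo where "lo K = fst (P K)" for K
    define hi where "hi K = fst (snd (P K))" for K
    define sd where "sd K = snd (snd (P K))" for K
    have P': "K = cbox (lo K) (hi K)" "0 < sd K" "\<And>i. hi K $ i - lo K $ i = sd K" if "K \<in> D" for K
      using P[OF that] unfolding lo_def hi_def sd_def by auto
    define J where "J = to_nat_on D ` D"
    define f where "f i = (if i \<in> J then from_nat_into D i else {})" for i
    have fD: "f i \<in> D" if "i \<in> J" for i
      using that D(1) unfolding f_def J_def by (auto simp: from_nat_into_to_nat_on)
    have fK: "f (to_nat_on D K) = K" if "K \<in> D" for K
      using that D(1) unfolding f_def J_def by (auto simp: from_nat_into_to_nat_on)
    define x where "x i = lo (f i)" for i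
    define r where "r i = (if i \<in> J then 2 * real d * sd (f i) else 0)" for i
    define g where "g i = (if i \<in> J then box (lo (f i)) (hi (f i)) else {})" for i
    have r0: "0 \<le> r i" for i
    proof (cases "i \<in> J")
      case True
      then have "0 < sd (f i)" using P'(2)[OF fD] by auto
      then show ?thesis unfolding r_def using d0 True by simp
    qed (simp add: r_def)
    have cov: "E \<subseteq> (\<Union>i. ball (x i) (r i))"
    proof
      fix y assume "y \<in> E"
      then obtain K where K: "K \<in> D" "y \<in> K" using D(6) by blast
      define i where "i = to_nat_on D K"
      have iJ: "i \<in> J" unfolding i_def J_def using K by auto
      have fi: "f i = K" unfolding i_def using fK K by auto
      have "y \<in> ball (lo K) (2 * real CARD('n) * sd K)"
        by (rule cube_ball[of y "lo K" "hi K"]) (use P'[OF K(1)] K in auto)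
      then have "y \<in> ball (x i) (r i)" unfolding x_def r_def d_def using iJ fi by simp
      then show "y \<in> (\<Union>i. ball (x i) (r i))" by blast
    qed
    have tm: "ennreal (omega (real d) * r i powr (real d)) = ennreal Kc * emeasure lborel (g i)" for i
    proof (cases "i \<in> J")
      case True
      have sp: "0 < sd (f i)" using P'(2)[OF fD[OF True]] .
      have "r i powr (real d) = (2 * real d * sd (f i)) ^ d"
        unfolding r_def using True sp d0 by (simp add: powr_realpow)
      also have "\<dots> = (2 * real d) ^ d * sd (f i) ^ d" by (simp add: power_mult_distrib)
      finally have 1: "omega (real d) * r i powr (real d) = Kc * sd (f i) ^ d"
        unfolding Kc_def by simp
      have 2: "emeasure lborel (g i) = ennreal (sd (f i) ^ d)"
        unfolding g_def d_def using True sp by (simp add: emeasure_box_cube P'(3)[OF fD[OF True]])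
      show ?thesis using 1 2 Kc sp by (simp add: ennreal_mult)
    next
      case False
      then show ?thesis unfolding r_def g_def using d0 by simp
    qed
    have disj: "disjoint_family g"
      unfolding disjoint_family_on_def
    proof (intro ballI impI)
      fix i j :: nat assume ij: "i \<noteq> j"
      show "g i \<inter> g j = {}"
      proof (cases "i \<in> J \<and> j \<in> J")
        case True
        then obtain K1 K2 where K: "K1 \<in> D" "K2 \<in> D" "i = to_nat_on D K1" "j = to_nat_on D K2"
          unfolding J_def by blast
        have ne: "K1 \<noteq> K2" using K ij by auto
        have f1: "f i = K1" "f j = K2" using fK K by auto
        have "interior K1 \<inter> interior K2 = {}" using D(3) K ne unfolding pairwise_def by blast
        then show ?thesis unfolding g_def using True f1 P'(1)[OF K(1)] P'(1)[OF K(2)]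
          by (metis interior_cbox)
      next
        case False
        then show ?thesis unfolding g_def by auto
      qed
    qed
    have gsub: "(\<Union>i. g i) \<subseteq> \<Union>D"
    proof
      fix y assume "y \<in> (\<Union>i. g i)"
      then obtain i where i: "i \<in> J" "y \<in> box (lo (f i)) (hi (f i))" unfolding g_def
        by (auto split: if_splits)
      then have "y \<in> f i" using P'(1)[OF fD[OF i(1)]] box_subset_cbox by blast
      then show "y \<in> \<Union>D" using fD[OF i(1)] by blast
    qed
    have "hcontent (real d) E \<le> (\<Sum>i. ennreal (omega (real d) * r i powr (real d)))"
      by (rule hc_le_cover[OF r0 cov])
    also have "\<dots> = (\<Sum>i. ennreal Kc * emeasure lborel (g i))" using tm by simp
    also have "\<dots> = ennreal Kc * (\<Sum>i. emeasure lborel (g i))" by (rule ennreal_suminf_cmult)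
    also have "(\<Sum>i. emeasure lborel (g i)) = emeasure lborel (\<Union>i. g i)"
      by (rule suminf_emeasure[OF _ disj]) (auto simp: g_def)
    also have "\<dots> = emeasure lebesgue (\<Union>i. g i)"
    proof -
      have "open (\<Union>i. g i)" unfolding g_def by (intro open_UN ballI) auto
      then have "(\<Union>i. g i) \<in> sets lborel" by simp
      then show ?thesis by simp
    qed
    also have "\<dots> \<le> emeasure lebesgue (\<Union>D)"
      by (rule emeasure_mono[OF gsub]) (use D(7) in auto)
    also have "\<dots> = ennreal (measure lebesgue (\<Union>D))"
      using D(7) by (simp add: emeasure_eq_measure2)
    also have "\<dots> \<le> ennreal (measure lebesgue E + e / Kc)"
      using D(8) by (rule ennreal_leI)
    finally have "hcontent (real d) E \<le> ennreal Kc * ennreal (measure lebesgue E + e / Kc)"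
      by (simp add: mult_left_mono)
    also have "\<dots> = ennreal Kc * emeasure lebesgue E + ennreal e"
    proof -
      have m0: "0 \<le> measure lebesgue E" by simp
      have "ennreal Kc * ennreal (measure lebesgue E + e / Kc) = ennreal (Kc * measure lebesgue E + e)"
        using Kc e m0 by (simp add: ennreal_mult[symmetric] distrib_left)
      also have "\<dots> = ennreal Kc * ennreal (measure lebesgue E) + ennreal e"
        using Kc e m0 by (simp add: ennreal_plus[symmetric] ennreal_mult[symmetric] del: ennreal_plus)
      also have "ennreal (measure lebesgue E) = emeasure lebesgue E"
        using Elm by (simp add: emeasure_eq_measure2)
      finally show ?thesis .
    qed
    finally show "hcontent (real d) E \<le> ennreal Kc * emeasure lebesgue E + ennreal e" .
  qed
  then show ?thesis unfolding Kc_def d_def .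
qed



lemma antimono_borel_ennreal:
  fixes g :: "real \<Rightarrow> ennreal"
  assumes g: "\<And>s t. s \<le> t \<Longrightarrow> g t \<le> g s"
  shows "g \<in> borel_measurable borel"
proof (rule borel_measurableI_greater)
  fix a :: ennreal
  define D where "D = {x. a < g x}"
  have down: "y \<in> D" if "x \<in> D" "y \<le> x" for x y
    using that g[of y x] unfolding D_def by auto
  show "{x \<in> space borel. a < g x} \<in> sets borel"
  proof (cases "D = UNIV \<or> D = {}")
    case True
    then have "{x \<in> space borel. a < g x} = UNIV \<or> {x \<in> space borel. a < g x} = {}"
      unfolding D_def by auto
    then show ?thesis by auto
  next
    case False
    then obtain z w where z: "z \<notin> D" and w: "w \<in> D" by auto
    have bdd: "bdd_above D"
    proof (rule bdd_aboveI)
      fix x assume "x \<in> D"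
      show "x \<le> z" using down[OF \<open>x \<in> D\<close>, of z] z by (cases "x \<le> z") auto
    qed
    define s where "s = Sup D"
    have 1: "{..<s} \<subseteq> D"
    proof
      fix y assume "y \<in> {..<s}"
      then have "y < Sup D" unfolding s_def by simp
      then obtain x where "x \<in> D" "y < x" using less_cSupD[of D y] w by auto
      then show "y \<in> D" using down by auto
    qed
    have 2: "D \<subseteq> {..s}" using bdd unfolding s_def by (auto intro: cSup_upper)
    have "D = {..<s} \<union> (D \<inter> {s})" using 1 2 by auto
    moreover have "{..<s} \<union> (D \<inter> {s}) \<in> sets borel"
    proof -
      have "D \<inter> {s} \<in> sets borel"
        by (cases "s \<in> D") auto
      then show ?thesis by auto
    qed
    ultimately show ?thesis unfolding D_def by simp
  qed
qed

lemma choquet_cong: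
  assumes "\<And>x. x \<in> A \<Longrightarrow> f x = g x"
  shows "choquet \<beta> A f = choquet \<beta> A g"
proof -
  have "\<And>t. {x \<in> A. f x > t} = {x \<in> A. g x > t}" using assms by auto
  then show ?thesis unfolding choquet_def by simp
qed

lemma choquet_mono_set:
  assumes "A \<subseteq> B"
  shows "choquet \<beta> A f \<le> choquet \<beta> B f"
  unfolding choquet_def
  by (intro nn_integral_mono mult_right_mono hc_mono) (use assms in auto)

lemma choquet_mono_fun:
  assumes "\<And>x. x \<in> A \<Longrightarrow> f x \<le> g x"
  shows "choquet \<beta> A f \<le> choquet \<beta> A g"
  unfolding choquet_def
  by (intro nn_integral_mono mult_right_mono hc_mono) (use assms in force)+

lemma choquet_meas:
  fixes f :: "'a::metric_space \<Rightarrow> real"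
  shows
  "(\<lambda>t. hcontent \<beta> {x \<in> A. f x > t} * indicator {0<..} t) \<in> borel_measurable borel"
proof -
  have "(\<lambda>t. hcontent \<beta> {x \<in> A. f x > t}) \<in> borel_measurable borel"
    by (rule antimono_borel_ennreal) (auto intro!: hc_mono)
  then show ?thesis by measurable
qed

lemma emeasure_level_meas:
  fixes M :: "'a measure" and f :: "'a \<Rightarrow> real"
  assumes m: "\<And>t. {x \<in> A. t < f x} \<in> sets M"
  shows "(\<lambda>t. emeasure M {x \<in> A. f x > t} * indicator {0<..} t) \<in> borel_measurable borel"
proof -
  have "(\<lambda>t. emeasure M {x \<in> A. f x > t}) \<in> borel_measurable borel"
    by (rule antimono_borel_ennreal) (auto intro!: emeasure_mono m)
  then show ?thesis by measurable
qed

lemma choquet_lower: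
  fixes M :: "'a::metric_space measure" and f :: "'a \<Rightarrow> real"
  assumes sp: "\<And>x r. ball x r \<in> sets M"
    and K: "0 < K"
    and ball: "\<And>x r. 0 \<le> r \<Longrightarrow> emeasure M (ball x r) \<le> ennreal K * ennreal (omega \<beta> * r powr \<beta>)"
    and f: "f \<in> borel_measurable M" and nn: "\<And>x. 0 \<le> f x"
    and A: "A \<in> sets M" and fin: "emeasure M A < \<infinity>"
  shows "(\<integral>\<^sup>+x. indicator A x * ennreal (f x) \<partial>M) \<le> ennreal K * choquet \<beta> A f"
proof -
  have "(\<integral>\<^sup>+x. indicator A x * ennreal (f x) \<partial>M) =
         set_nn_integral lborel {0<..} (\<lambda>t. emeasure M {x \<in> A. f x > t})"
    by (rule layer_cake[OF f nn A fin])
  also have "\<dots> \<le> set_nn_integral lborel {0<..} (\<lambda>t. ennreal K * hcontent \<beta> {x \<in> A. f x > t})"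
  proof (intro nn_integral_mono mult_right_mono)
    fix t
    have "{x \<in> A. f x > t} = A \<inter> {x \<in> space M. t < f x}"
      using A sets.sets_into_space by auto
    also have "\<dots> \<in> sets M" using A f by measurable
    finally show "emeasure M {x \<in> A. f x > t} \<le> ennreal K * hcontent \<beta> {x \<in> A. f x > t}"
      by (rule emeasure_le_hc[OF sp _ K ball])
  qed auto
  also have "\<dots> = ennreal K * choquet \<beta> A f"
    unfolding choquet_def using choquet_meas[of \<beta> A f]
    by (simp add: nn_integral_cmult[symmetric] mult.assoc)
  finally show ?thesis .
qed

lemma choquet_upper:
  fixes f :: "real^'n \<Rightarrow> real" and a b :: "real^'n"
  assumes ab: "\<And>i. b$i - a$i = l" and l: "0 < l"
    and f: "f \<in> borel_measurable lebesgue" and nn: "\<And>x. 0 \<le> f x"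
  shows "choquet (real CARD('n)) (cbox a b) f \<le>
    ennreal (omega (real CARD('n)) * (2 * real CARD('n)) ^ CARD('n)) *
      (\<integral>\<^sup>+x. indicator (cbox a b) x * ennreal (f x) \<partial>lebesgue)"
proof -
  define Kc where "Kc = omega (real CARD('n)) * (2 * real CARD('n)) ^ CARD('n)"
  have fin: "emeasure lebesgue (cbox a b) < \<infinity>"
    using lmeasurable_cbox by (simp add: fmeasurable_def)
  have mt: "{x \<in> cbox a b. t < f x} \<in> sets lebesgue" for t
  proof -
    have "{x \<in> cbox a b. f x > t} = cbox a b \<inter> {x \<in> space lebesgue. t < f x}" by auto
    also have "\<dots> \<in> sets lebesgue"
    proof (rule sets.Int)
      show "{x \<in> space lebesgue. t < f x} \<in> sets lebesgue" using f by measurable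
    qed simp
    finally show ?thesis .
  qed
  have "choquet (real CARD('n)) (cbox a b) f \<le>
      set_nn_integral lborel {0<..} (\<lambda>t. ennreal Kc * emeasure lebesgue {x \<in> cbox a b. f x > t})"
    unfolding choquet_def
  proof (intro nn_integral_mono mult_right_mono)
    fix t
    show "hcontent (real CARD('n)) {x \<in> cbox a b. f x > t} \<le> ennreal Kc * emeasure lebesgue {x \<in> cbox a b. f x > t}"
      unfolding Kc_def by (intro hc_le_lebesgue[OF mt _ ab l]) auto
  qed auto
  also have "\<dots> = ennreal Kc * set_nn_integral lborel {0<..} (\<lambda>t. emeasure lebesgue {x \<in> cbox a b. f x > t})"
    using emeasure_level_meas[of "cbox a b" f lebesgue, OF mt]
    by (simp add: nn_integral_cmult[symmetric] mult.assoc)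
  also have "set_nn_integral lborel {0<..} (\<lambda>t. emeasure lebesgue {x \<in> cbox a b. f x > t}) =
      (\<integral>\<^sup>+x. indicator (cbox a b) x * ennreal (f x) \<partial>lebesgue)"
    by (rule layer_cake[symmetric, OF f nn _ fin]) simp
  finally show ?thesis unfolding Kc_def .
qed



lemma measurable_AE_completion:
  fixes h g :: "'a \<Rightarrow> real"
  assumes g: "g \<in> borel_measurable (completion N)"
    and B: "B \<in> null_sets N" and eq: "\<And>x. x \<notin> B \<Longrightarrow> h x = g x"
  shows "h \<in> borel_measurable (completion N)"
proof (rule measurableI)
  fix x show "h x \<in> space borel" by simp
next
  fix S :: "real set" assume S: "S \<in> sets borel"
  have ae: "AE x in completion N. x \<notin> B"
    by (rule AE_completion) (rule AE_not_in[OF B])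
  have "AE x in completion N. x \<in> g -` S \<inter> space (completion N) \<longleftrightarrow> x \<in> h -` S \<inter> space (completion N)"
    using ae by eventually_elim (auto simp: eq)
  moreover have "g -` S \<inter> space (completion N) \<in> sets (completion N)"
    using g S by (rule measurable_sets)
  ultimately show "h -` S \<inter> space (completion N) \<in> sets (completion N)"
    by (rule completion.in_sets_AE) auto
qed

lemma hc_zero_of_small:
  assumes "\<And>n::nat. hcontent \<beta> B < ennreal (1 / Suc n)"
  shows "hcontent \<beta> B = 0"
proof -
  have "hcontent \<beta> B \<le> 0"
  proof (rule ennreal_le_epsilon)
    fix e :: real assume e: "0 < e"
    obtain n where n: "inverse (real (Suc n)) < e" using reals_Archimedean[OF e] by auto
    have "hcontent \<beta> B \<le> ennreal (1 / Suc n)" using assms[of n] by simp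
    also have "\<dots> \<le> ennreal e" using n by (intro ennreal_leI) (simp add: inverse_eq_divide)
    finally show "hcontent \<beta> B \<le> 0 + ennreal e" by simp
  qed
  then show ?thesis by simp
qed

lemma qc_measurable:
  fixes N :: "'a::metric_space measure" and u :: "'a \<Rightarrow> real"
  assumes N: "sets N = sets borel" and K: "0 < K"
    and ball: "\<And>x r. 0 \<le> r \<Longrightarrow> emeasure N (ball x r) \<le> ennreal K * ennreal (omega \<beta> * r powr \<beta>)"
    and qc: "hc_quasicontinuous_on \<beta> Q u" and A: "closed A" "A \<subseteq> Q"
  shows "(\<lambda>x. indicator A x * u x) \<in> borel_measurable (completion N)"
proof -
  have "\<forall>n::nat. \<exists>U. open U \<and> hcontent \<beta> U < ennreal (1 / Suc n) \<and> continuous_on (Q - U) u"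
    using qc unfolding hc_quasicontinuous_on_def by auto
  then obtain U where U: "\<And>n. open (U n)" "\<And>n. hcontent \<beta> (U n) < ennreal (1 / Suc n)"
      "\<And>n. continuous_on (Q - U n) u"
    by metis
  define B where "B = (\<Inter>n. U n)"
  have "hcontent \<beta> B = 0"
  proof (rule hc_zero_of_small)
    fix n
    have "hcontent \<beta> B \<le> hcontent \<beta> (U n)" unfolding B_def by (intro hc_mono) auto
    also have "\<dots> < ennreal (1 / Suc n)" by (rule U(2))
    finally show "hcontent \<beta> B < ennreal (1 / Suc n)" .
  qed
  have Bb: "B \<in> sets borel" unfolding B_def using U(1)
    by (intro countable_Un_Int(2)) auto
  have spN: "\<And>x r. ball x r \<in> sets N" using N by simp
  have "emeasure N B \<le> ennreal K * hcontent \<beta> B"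
    by (rule emeasure_le_hc[OF spN _ K ball]) (use Bb N in auto)
  then have BN: "B \<in> null_sets N" using \<open>hcontent \<beta> B = 0\<close> Bb N by auto
  define F where "F n = (\<Union>m\<in>{..n}. A - U m)" for n
  have Fc: "continuous_on (F n) u" for n
    unfolding F_def
  proof (rule continuous_on_closed_Union)
    fix m assume "m \<in> {..n}"
    show "closed (A - U m)" using A(1) U(1) by (intro closed_Diff) auto
    show "continuous_on (A - U m) u" by (rule continuous_on_subset[OF U(3)[of m]]) (use A(2) in auto)
  qed simp
  have Fb: "F n \<in> sets borel" for n
    unfolding F_def using A(1) U(1) by (intro borel_closed closed_UN closed_Diff) auto
  define g where "g x = indicator (A - B) x * u x" for x
  have hm: "(\<lambda>x. indicator (F n) x *\<^sub>R u x) \<in> borel_measurable borel" for n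
    by (rule borel_measurable_continuous_on_indicator[OF Fb Fc])
  have "g \<in> borel_measurable borel"
  proof (rule borel_measurable_LIMSEQ_metric[OF hm])
    fix x :: 'a
    show "(\<lambda>n. indicator (F n) x *\<^sub>R u x) \<longlonglongrightarrow> g x"
    proof (cases "x \<in> A - B")
      case True
      then obtain m where m: "x \<notin> U m" "x \<in> A" unfolding B_def by auto
      have "eventually (\<lambda>n. indicator (F n) x *\<^sub>R u x = g x) sequentially"
        using eventually_ge_at_top[of m]
      proof eventually_elim
        case (elim n)
        then have "x \<in> F n" using m unfolding F_def by auto
        then show ?case using True unfolding g_def by simp
      qed
      then show ?thesis by (rule tendsto_eventually)
    next
      case False
      have "x \<notin> F n" for n using False unfolding F_def B_def by auto
      then show ?thesis using False unfolding g_def by simp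
    qed
  qed
  then have "g \<in> borel_measurable N" using N by (simp add: measurable_cong_sets[OF N refl])
  then have gc: "g \<in> borel_measurable (completion N)" by (rule measurable_completion)
  show ?thesis
    by (rule measurable_AE_completion[OF gc BN]) (auto simp: g_def indicator_def)
qed



lemma cube_cbox: "cube c r = cbox c (\<chi> i. c$i + r)"
  by (auto simp: cube_def mem_box_cart)

lemma plane_cube_cbox: "0 \<le> r \<Longrightarrow> plane_cube S c r = cbox c (\<chi> i. if i \<in> S then c$i + r else c$i)"
  unfolding plane_cube_def by (auto simp: mem_box_cart) (metis order_antisym)+

lemma powr_real_nat: "0 \<le> r \<Longrightarrow> 0 < n \<Longrightarrow> r powr (real n) = r ^ n"
  by (cases "r = 0") (auto simp: powr_realpow)

lemma leb_ball:
  fixes x :: "real^'n"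
  assumes "0 \<le> r"
  shows "emeasure lborel (ball x r) \<le> ennreal 1 * ennreal (omega (real CARD('n)) * r powr real CARD('n))"
  using assms by (simp add: emeasure_ball unit_ball_vol_def omega_def powr_real_nat)

lemma leb_cube:
  fixes c :: "real^'n"
  assumes "0 < r"
  shows "emeasure lborel (cube c r) = ennreal (r ^ CARD('n))"
proof -
  have b: "\<And>b. b \<in> Basis \<Longrightarrow> ((\<chi> i. c$i + r) - c) \<bullet> b = r"
    by (auto simp: Basis_vec_def inner_axis)
  have "emeasure lborel (cube c r) = ennreal (prod ((\<bullet>) ((\<chi> i. c$i + r) - c)) Basis)"
    unfolding cube_cbox
  proof (intro emeasure_lborel_cbox)
    fix e :: "real^'n" assume "e \<in> Basis"
    then have "(\<chi> i. c$i + r) \<bullet> e - c \<bullet> e = r" using b by (simp add: inner_diff_left)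
    then show "c \<bullet> e \<le> (\<chi> i. c$i + r) \<bullet> e" using assms by linarith
  qed
  also have "prod ((\<bullet>) ((\<chi> i. c$i + r) - c)) Basis = (\<Prod>b\<in>(Basis::(real^'n) set). r)"
    using b by (intro prod.cong) auto
  also have "\<dots> = r ^ CARD('n)" by simp
  finally show ?thesis .
qed

definition emb :: "'n set \<Rightarrow> real^'n \<Rightarrow> ('n \<Rightarrow> real) \<Rightarrow> real^'n" where
  "emb S a = (\<lambda>y. \<chi> i. if i \<in> S then y i else a$i)"

lemma emb_meas:
  fixes S :: "'n::finite set"
  shows "emb S a \<in> borel_measurable (Pi\<^sub>M S (\<lambda>_. lborel))"
proof (subst borel_measurable_euclidean_space, intro ballI)
  fix b :: "real^'n" assume "b \<in> Basis"
  then obtain j where b: "b = axis j 1" by (auto simp: Basis_vec_def)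
  show "(\<lambda>x. emb S a x \<bullet> b) \<in> borel_measurable (Pi\<^sub>M S (\<lambda>_. lborel))"
  proof (cases "j \<in> S")
    case True
    have "(\<lambda>x. x j) \<in> borel_measurable (Pi\<^sub>M S (\<lambda>_. lborel))"
      using measurable_component_singleton[OF True, of "\<lambda>_. lborel"] by simp
    then show ?thesis using True by (simp add: b emb_def inner_axis)
  next
    case False
    then show ?thesis by (simp add: b emb_def inner_axis)
  qed
qed

lemma plane_measure_eq: "plane_measure S a = completion (distr (Pi\<^sub>M S (\<lambda>_. lborel)) borel (emb S a))"
  unfolding plane_measure_def emb_def ..

lemma psf_lborel: "product_sigma_finite (\<lambda>_::'n. lborel :: real measure)"
  by (rule product_sigma_finite.intro) (rule sigma_finite_lborel)

lemma emeasure_PiM_Icc: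
  fixes S :: "'n::finite set"
  assumes "\<And>i. i \<in> S \<Longrightarrow> lo i \<le> hi i"
  shows "emeasure (Pi\<^sub>M S (\<lambda>_. lborel)) (Pi\<^sub>E S (\<lambda>i. {lo i..hi i})) = ennreal (\<Prod>i\<in>S. hi i - lo i)"
proof -
  have "emeasure (Pi\<^sub>M S (\<lambda>_. lborel)) (Pi\<^sub>E S (\<lambda>i. {lo i..hi i})) = (\<Prod>i\<in>S. emeasure lborel {lo i..hi i})"
    by (rule product_sigma_finite.emeasure_PiM[OF psf_lborel]) auto
  also have "\<dots> = (\<Prod>i\<in>S. ennreal (hi i - lo i))"
    using assms by (intro prod.cong) auto
  also have "\<dots> = ennreal (\<Prod>i\<in>S. hi i - lo i)"
    using assms by (intro prod_ennreal) auto
  finally show ?thesis .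
qed

lemma plane_ball:
  fixes S :: "'n::finite set" and x a :: "real^'n"
  assumes r: "0 \<le> r" and k: "card S = k" "0 < k"
  shows "emeasure (distr (Pi\<^sub>M S (\<lambda>_. lborel)) borel (emb S a)) (ball x r)
    \<le> ennreal (2^k / omega (real k)) * ennreal (omega (real k) * r powr real k)"
proof -
  have om: "0 < omega (real k)" using k by (intro omega_pos) auto
  have "emeasure (distr (Pi\<^sub>M S (\<lambda>_. lborel)) borel (emb S a)) (ball x r)
      = emeasure (Pi\<^sub>M S (\<lambda>_. lborel)) (emb S a -` ball x r \<inter> space (Pi\<^sub>M S (\<lambda>_. lborel)))"
    by (rule emeasure_distr[OF emb_meas]) simp
  also have "\<dots> \<le> emeasure (Pi\<^sub>M S (\<lambda>_. lborel)) (Pi\<^sub>E S (\<lambda>i. {x$i - r..x$i + r}))"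
  proof (rule emeasure_mono)
    show "emb S a -` ball x r \<inter> space (Pi\<^sub>M S (\<lambda>_. lborel)) \<subseteq> Pi\<^sub>E S (\<lambda>i. {x$i - r..x$i + r})"
    proof
      fix y assume y: "y \<in> emb S a -` ball x r \<inter> space (Pi\<^sub>M S (\<lambda>_. lborel))"
      then have yE: "y \<in> Pi\<^sub>E S (\<lambda>_. UNIV)" by (simp add: space_PiM)
      have d: "norm (emb S a y - x) < r" using y by (simp add: dist_norm norm_minus_commute)
      show "y \<in> Pi\<^sub>E S (\<lambda>i. {x$i - r..x$i + r})"
      proof (rule PiE_I)
        fix i assume i: "i \<in> S"
        have "\<bar>(emb S a y - x) $ i\<bar> \<le> norm (emb S a y - x)" by (rule component_le_norm_cart)
        then have "\<bar>y i - x$i\<bar> < r" using d i by (simp add: emb_def)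
        then show "y i \<in> {x$i - r..x$i + r}" by auto
      next
        fix i assume "i \<notin> S" then show "y i = undefined" using yE by (auto simp: PiE_def extensional_def)
      qed
    qed
  qed (auto intro!: sets_PiM_I_finite)
  also have "\<dots> = ennreal (\<Prod>i\<in>S. (x$i + r) - (x$i - r))"
    using r by (intro emeasure_PiM_Icc) auto
  also have "(\<Prod>i\<in>S. (x$i + r) - (x$i - r)) = (2 * r) ^ k" using k by simp
  also have "(2 * r) ^ k = (2^k / omega (real k)) * (omega (real k) * r powr real k)"
    using om r k by (simp add: powr_real_nat power_mult_distrib)
  also have "ennreal \<dots> = ennreal (2^k / omega (real k)) * ennreal (omega (real k) * r powr real k)"
    using om r by (intro ennreal_mult) auto
  finally show ?thesis .
qed

lemma plane_cube_measure:
  fixes S :: "'n::finite set" and c a :: "real^'n"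
  assumes r: "0 < r" and k: "card S = k" and ca: "\<And>i. i \<notin> S \<Longrightarrow> c$i = a$i"
  shows "emeasure (distr (Pi\<^sub>M S (\<lambda>_. lborel)) borel (emb S a)) (plane_cube S c r) = ennreal (r ^ k)"
proof -
  have pc: "plane_cube S c r \<in> sets borel" using r by (simp add: plane_cube_cbox)
  have "emeasure (distr (Pi\<^sub>M S (\<lambda>_. lborel)) borel (emb S a)) (plane_cube S c r)
      = emeasure (Pi\<^sub>M S (\<lambda>_. lborel)) (emb S a -` plane_cube S c r \<inter> space (Pi\<^sub>M S (\<lambda>_. lborel)))"
    by (rule emeasure_distr[OF emb_meas pc])
  also have "emb S a -` plane_cube S c r \<inter> space (Pi\<^sub>M S (\<lambda>_. lborel)) = Pi\<^sub>E S (\<lambda>i. {c$i..c$i + r})"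
    using ca by (auto simp: space_PiM plane_cube_def emb_def PiE_def Pi_def extensional_def)
  also have "emeasure (Pi\<^sub>M S (\<lambda>_. lborel)) (Pi\<^sub>E S (\<lambda>i. {c$i..c$i + r})) = ennreal (\<Prod>i\<in>S. (c$i + r) - c$i)"
    using r by (intro emeasure_PiM_Icc) auto
  also have "(\<Prod>i\<in>S. (c$i + r) - c$i) = r ^ k" using k by simp
  finally show ?thesis .
qed



lemma set_integrable_const':
  assumes "Q \<in> sets M" "emeasure M Q < \<infinity>"
  shows "set_integrable M Q (\<lambda>x. k::real)"
  unfolding set_integrable_def using integrable_real_indicator[OF assms]
  by (rule integrable_scaleR_left)

lemma osc_le:
  fixes M :: "'a measure" and u :: "'a \<Rightarrow> real"
  assumes int: "set_integrable M Q u" and Q: "Q \<in> sets M" and fin: "emeasure M Q < \<infinity>"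
  shows "(LINT x:Q|M. \<bar>u x - (LINT y:Q|M. u y) / measure M Q\<bar>) \<le> 2 * (LINT x:Q|M. \<bar>u x - c\<bar>)"
proof -
  define \<mu> where "\<mu> = measure M Q"
  define m where "m = (LINT y:Q|M. u y) / \<mu>"
  have ic: "set_integrable M Q (\<lambda>x. k::real)" for k by (rule set_integrable_const'[OF Q fin])
  have const: "(LINT x:Q|M. k) = \<mu> * k" for k :: real
    unfolding \<mu>_def using Q fin by (simp add: set_integral_const)
  have i1: "set_integrable M Q (\<lambda>x. \<bar>u x - c\<bar>)"
    by (intro set_integrable_abs set_integral_diff(1) int ic)
  have i2: "set_integrable M Q (\<lambda>x. \<bar>u x - m\<bar>)"
    by (intro set_integrable_abs set_integral_diff(1) int ic)
  have nn: "0 \<le> (LINT x:Q|M. \<bar>u x - c\<bar>)"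
    unfolding set_lebesgue_integral_def by (intro integral_nonneg_AE) (auto simp: indicator_def)
  have "(LINT x:Q|M. \<bar>u x - m\<bar>) \<le> (LINT x:Q|M. \<bar>u x - c\<bar> + \<bar>c - m\<bar>)"
    by (rule set_integral_mono[OF i2]) (auto intro!: set_integral_add(1) i1 ic)
  also have "\<dots> = (LINT x:Q|M. \<bar>u x - c\<bar>) + \<mu> * \<bar>c - m\<bar>"
    using i1 ic by (simp add: set_integral_add(2) const)
  also have "\<mu> * \<bar>c - m\<bar> \<le> (LINT x:Q|M. \<bar>u x - c\<bar>)"
  proof (cases "\<mu> = 0")
    case True
    then show ?thesis using nn by simp
  next
    case False
    have mu0: "0 \<le> \<mu>" unfolding \<mu>_def by simp
    have "\<mu> * (c - m) = \<mu> * c - (LINT y:Q|M. u y)" using False unfolding m_def by (simp add: field_simps)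
    also have "\<dots> = (LINT x:Q|M. c - u x)" using int ic by (simp add: set_integral_diff(2) const)
    finally have eq: "\<mu> * \<bar>c - m\<bar> = \<bar>LINT x:Q|M. c - u x\<bar>" using mu0
      by (metis abs_mult abs_of_nonneg)
    also have "\<dots> \<le> (LINT x:Q|M. \<bar>u x - c\<bar>)"
      unfolding set_lebesgue_integral_def
    proof -
      have "\<bar>LINT x|M. indicator Q x *\<^sub>R (c - u x)\<bar> \<le> (LINT x|M. \<bar>indicator Q x *\<^sub>R (c - u x)\<bar>)"
        by (rule integral_abs_bound)
      also have "(\<lambda>x. \<bar>indicator Q x *\<^sub>R (c - u x)\<bar>) = (\<lambda>x. indicator Q x *\<^sub>R \<bar>u x - c\<bar>)"
        by (rule ext) (simp add: indicator_def abs_minus_commute)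
      finally show "\<bar>LINT x|M. indicator Q x *\<^sub>R (c - u x)\<bar> \<le> (LINT x|M. indicator Q x *\<^sub>R \<bar>u x - c\<bar>)" .
    qed
    finally show ?thesis .
  qed
  finally show ?thesis unfolding m_def \<mu>_def by simp
qed



lemma bmo_trace_abstract:
  fixes N :: "(real^'n) measure" and u :: "real^'n \<Rightarrow> real"
  assumes N: "sets N = sets borel" and K: "0 < K"
    and ball: "\<And>x r. 0 \<le> r \<Longrightarrow> emeasure N (ball x r) \<le> ennreal K * ennreal (omega \<beta> * r powr \<beta>)"
    and u: "u \<in> BMO_content \<beta> Q0"
    and Q': "closed Q'" "Q' \<subseteq> cube c' r" "cube c' r \<subseteq> Q0" "0 < r" "emeasure N Q' = ennreal (r powr \<beta>)"
  shows "set_integrable (completion N) Q' u \<and>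
    ennreal ((LINT x:Q'|completion N. \<bar>u x - (LINT y:Q'|completion N. u y) / measure (completion N) Q'\<bar>)
       / measure (completion N) Q') \<le> ennreal (2*K) * bmo_content_norm \<beta> Q0 u"
proof -
  define M where "M = completion N"
  have QN: "Q' \<in> sets N" using Q'(1) N by simp
  have QM: "Q' \<in> sets M" unfolding M_def using QN by simp
  have eQ: "emeasure M Q' = ennreal (r powr \<beta>)" unfolding M_def using QN Q'(5) by simp
  have finM: "emeasure M Q' < \<infinity>" using eQ by simp
  have V: "measure M Q' = r powr \<beta>" using eQ by (simp add: measure_def)
  have Vpos: "0 < r powr \<beta>" using Q'(4) by simp
  have spM: "\<And>x r. ball x r \<in> sets M" unfolding M_def using N by simp
  have ballM: "emeasure M (ball x s) \<le> ennreal K * ennreal (omega \<beta> * s powr \<beta>)" if "0 \<le> s" for x s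
  proof -
    have "ball x s \<in> sets N" using N by simp
    then have "emeasure M (ball x s) = emeasure N (ball x s)" unfolding M_def by simp
    then show ?thesis using ball[OF that] by simp
  qed
  have L1: "L1_content \<beta> Q0 u" and Nfin: "bmo_content_norm \<beta> Q0 u < top"
    using u unfolding BMO_content_def by auto
  have qc: "hc_quasicontinuous_on \<beta> Q0 u" and ch0: "choquet \<beta> Q0 (\<lambda>x. \<bar>u x\<bar>) < top"
    using L1 unfolding L1_content_def by auto
  define h where "h x = indicator Q' x * u x" for x
  have hm: "h \<in> borel_measurable M"
    unfolding h_def M_def using Q'(2,3)
    by (intro qc_measurable[OF N K ball qc Q'(1)]) auto
  have key: "(\<integral>\<^sup>+x. indicator Q' x * ennreal \<bar>h x - c\<bar> \<partial>M) \<le> ennreal K * choquet \<beta> (cube c' r) (\<lambda>x. \<bar>u x - c\<bar>)"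
    for c
  proof -
    have "(\<integral>\<^sup>+x. indicator Q' x * ennreal \<bar>h x - c\<bar> \<partial>M) \<le> ennreal K * choquet \<beta> Q' (\<lambda>x. \<bar>h x - c\<bar>)"
      by (rule choquet_lower[OF spM K ballM _ _ QM finM]) (use hm in auto)
    also have "choquet \<beta> Q' (\<lambda>x. \<bar>h x - c\<bar>) = choquet \<beta> Q' (\<lambda>x. \<bar>u x - c\<bar>)"
      by (rule choquet_cong) (simp add: h_def)
    also have "\<dots> \<le> choquet \<beta> (cube c' r) (\<lambda>x. \<bar>u x - c\<bar>)"
      by (rule choquet_mono_set[OF Q'(2)])
    finally show ?thesis by (simp add: mult_left_mono)
  qed
  have int: "set_integrable M Q' u"
    unfolding set_integrable_def
  proof (rule integrableI_bounded)
    show "(\<lambda>x. indicator Q' x *\<^sub>R u x) \<in> borel_measurable M" using hm[unfolded h_def] by simp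
    have "(\<integral>\<^sup>+x. ennreal (norm (indicator Q' x *\<^sub>R u x)) \<partial>M) = (\<integral>\<^sup>+x. indicator Q' x * ennreal \<bar>h x - 0\<bar> \<partial>M)"
      by (intro nn_integral_cong) (auto simp: h_def indicator_def)
    also have "\<dots> \<le> ennreal K * choquet \<beta> (cube c' r) (\<lambda>x. \<bar>u x - 0\<bar>)" by (rule key)
    also have "\<dots> \<le> ennreal K * choquet \<beta> Q0 (\<lambda>x. \<bar>u x\<bar>)"
      using choquet_mono_set[OF Q'(3), of \<beta> "\<lambda>x. \<bar>u x\<bar>"] by (simp add: mult_left_mono)
    also have "\<dots> < \<infinity>" using ch0 by (simp add: ennreal_mult_less_top)
    finally show "(\<integral>\<^sup>+x. ennreal (norm (indicator Q' x *\<^sub>R u x)) \<partial>M) < \<infinity>" .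
  qed
  have Ac: "ennreal (LINT x:Q'|M. \<bar>u x - c\<bar>) \<le> ennreal K * choquet \<beta> (cube c' r) (\<lambda>x. \<bar>u x - c\<bar>)" for c
  proof -
    have ic: "set_integrable M Q' (\<lambda>x. \<bar>u x - c\<bar>)"
      by (intro set_integrable_abs set_integral_diff(1) int set_integrable_const'[OF QM finM])
    have "ennreal (LINT x:Q'|M. \<bar>u x - c\<bar>) = (\<integral>\<^sup>+x. ennreal (indicator Q' x *\<^sub>R \<bar>u x - c\<bar>) \<partial>M)"
      unfolding set_lebesgue_integral_def
      using ic unfolding set_integrable_def by (intro nn_integral_eq_integral[symmetric]) auto
    also have "\<dots> = (\<integral>\<^sup>+x. indicator Q' x * ennreal \<bar>h x - c\<bar> \<partial>M)"
      by (intro nn_integral_cong) (auto simp: h_def indicator_def)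
    also have "\<dots> \<le> ennreal K * choquet \<beta> (cube c' r) (\<lambda>x. \<bar>u x - c\<bar>)" by (rule key)
    finally show ?thesis .
  qed
  define osc where "osc = (LINT x:Q'|M. \<bar>u x - (LINT y:Q'|M. u y) / measure M Q'\<bar>)"
  have "ennreal (osc / measure M Q') \<le>
      ennreal (2*K) * (INF c. ennreal (r powr (-\<beta>)) * choquet \<beta> (cube c' r) (\<lambda>x. \<bar>u x - c\<bar>))"
  proof (rule le_mult_INF_ennreal)
    show "0 < ennreal (2*K)" "ennreal (2*K) < top" using K by auto
    fix c :: real
    have "osc \<le> 2 * (LINT x:Q'|M. \<bar>u x - c\<bar>)" unfolding osc_def by (rule osc_le[OF int QM finM])
    then have "osc / measure M Q' \<le> (2 / r powr \<beta>) * (LINT x:Q'|M. \<bar>u x - c\<bar>)"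
      using V Vpos by (simp add: divide_right_mono)
    then have "ennreal (osc / measure M Q') \<le> ennreal ((2 / r powr \<beta>) * (LINT x:Q'|M. \<bar>u x - c\<bar>))"
      by (rule ennreal_leI)
    also have "\<dots> = ennreal (2 / r powr \<beta>) * ennreal (LINT x:Q'|M. \<bar>u x - c\<bar>)"
    proof (intro ennreal_mult)
      show "0 \<le> 2 / r powr \<beta>" using Vpos by simp
      show "0 \<le> (LINT x:Q'|M. \<bar>u x - c\<bar>)"
        unfolding set_lebesgue_integral_def by (intro integral_nonneg_AE) (auto simp: indicator_def)
    qed
    also have "\<dots> \<le> ennreal (2 / r powr \<beta>) * (ennreal K * choquet \<beta> (cube c' r) (\<lambda>x. \<bar>u x - c\<bar>))"
      by (intro mult_left_mono Ac) auto
    also have "\<dots> = ennreal (2*K) * (ennreal (r powr (-\<beta>)) * choquet \<beta> (cube c' r) (\<lambda>x. \<bar>u x - c\<bar>))"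
    proof -
      have 1: "ennreal (2 / r powr \<beta>) = ennreal 2 * ennreal (r powr (-\<beta>))"
      proof -
        have "ennreal (2 / r powr \<beta>) = ennreal (2 * r powr (-\<beta>))"
          by (simp add: powr_minus divide_inverse)
        also have "\<dots> = ennreal 2 * ennreal (r powr (-\<beta>))" by (rule ennreal_mult) auto
        finally show ?thesis .
      qed
      have 2: "ennreal (2*K) = ennreal 2 * ennreal K"
        using K by (intro ennreal_mult) auto
      show ?thesis unfolding 1 2 by (simp add: mult_ac)
    qed
    finally show "ennreal (osc / measure M Q') \<le>
      ennreal (2*K) * (ennreal (r powr (-\<beta>)) * choquet \<beta> (cube c' r) (\<lambda>x. \<bar>u x - c\<bar>))" .
  qed
  also have "\<dots> \<le> ennreal (2*K) * bmo_content_norm \<beta> Q0 u"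
  proof (rule mult_left_mono)
    have "(c', r) \<in> subcube_data Q0" using Q'(3,4) unfolding subcube_data_def by auto
    then show "(INF c. ennreal (r powr (-\<beta>)) * choquet \<beta> (cube c' r) (\<lambda>x. \<bar>u x - c\<bar>)) \<le> bmo_content_norm \<beta> Q0 u"
      unfolding bmo_content_norm_def by (rule SUP_upper2) simp
  qed simp
  finally show ?thesis using int unfolding osc_def M_def by simp
qed



lemma lusin_qc:
  fixes F :: "real^'n \<Rightarrow> real" and a b :: "real^'n"
  assumes F: "F \<in> borel_measurable lebesgue" and Q: "Q \<subseteq> box a b"
    and ab: "\<And>i. b$i - a$i = l" and l: "0 < l"
  shows "hc_quasicontinuous_on (real CARD('n)) Q F"
  unfolding hc_quasicontinuous_on_def
proof (intro allI impI)
  fix \<epsilon> :: real assume \<epsilon>: "0 < \<epsilon>"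
  define Kc where "Kc = omega (real CARD('n)) * (2 * real CARD('n)) ^ CARD('n)"
  have Kc: "0 < Kc" unfolding Kc_def by (intro mult_pos_pos omega_pos) auto
  define \<eta> where "\<eta> = \<epsilon> / Kc"
  have \<eta>: "0 < \<eta>" unfolding \<eta>_def using \<epsilon> Kc by simp
  have UL: "(UNIV :: (real^'n) set) \<in> sets lebesgue" by simp
  have "F measurable_on UNIV" using lebesgue_measurable_imp_measurable_on_real[OF F UL] .
  then obtain N g where N: "negligible N" and gc: "\<And>n. continuous_on UNIV (g n)"
    and lim0: "\<forall>x. x \<notin> N \<longrightarrow> (\<lambda>n. g n x) \<longlonglongrightarrow> (if x \<in> UNIV then F x else 0)"
    unfolding measurable_on_def by blast
  have lim: "\<And>x. x \<notin> N \<Longrightarrow> (\<lambda>n. g n x) \<longlonglongrightarrow> F x" using lim0 by simp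
  have Nnull: "N \<in> null_sets lebesgue" using N by (simp add: negligible_iff_null_sets)
  have Ns: "N \<in> sets lebesgue" using Nnull by auto
  have \<eta>4: "0 < \<eta>/4" using \<eta> by simp
  obtain G where G: "open G" "N \<subseteq> G" "emeasure lebesgue (G - N) < ennreal (\<eta>/4)"
    by (rule sets_lebesgue_outer_open[OF Ns \<eta>4]) (rule that)
  have Gm: "G \<in> sets lebesgue" using G(1) by simp
  have eG: "emeasure lebesgue (G \<inter> box a b) \<le> ennreal (\<eta>/4)"
  proof -
    have "emeasure lebesgue (G \<inter> box a b) \<le> emeasure lebesgue G" by (rule emeasure_mono) (use Gm in auto)
    also have "\<dots> = emeasure lebesgue (G - N)" by (rule emeasure_Diff_null_set[OF Nnull Gm, symmetric])
    finally show ?thesis using G(3) by simp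
  qed
  define Ob where "Ob m n = box a b \<inter> (\<Union>p\<in>{n..}. \<Union>q\<in>{n..}. {x. 1 / real (Suc m) < \<bar>g p x - g q x\<bar>})" for m n
  have Oopen: "open (Ob m n)" for m n
    unfolding Ob_def
    by (intro open_Int open_box open_UN ballI open_Collect_less continuous_intros gc)
  have Om: "Ob m n \<in> sets lebesgue" for m n using Oopen[of m n] by simp
  have Odec: "Ob m (Suc n) \<subseteq> Ob m n" for m n unfolding Ob_def by (auto 4 4 intro: Suc_leD)
  have Ofin: "emeasure lebesgue (Ob m n) \<noteq> \<infinity>" for m n
  proof -
    have "emeasure lebesgue (Ob m n) \<le> emeasure lebesgue (box a b)"
      by (rule emeasure_mono) (auto simp: Ob_def)
    also have "\<dots> < \<infinity>" using emeasure_lborel_box_finite by simp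
    finally show ?thesis by simp
  qed
  have Ointer: "(\<Inter>n. Ob m n) \<subseteq> N" for m
  proof
    fix x assume x: "x \<in> (\<Inter>n. Ob m n)"
    show "x \<in> N"
    proof (rule ccontr)
      assume "x \<notin> N"
      then have "Cauchy (\<lambda>n. g n x)" using lim by (intro LIMSEQ_imp_Cauchy) auto
      moreover have "0 < 1 / real (Suc m)" by simp
      ultimately obtain M where M: "\<And>p q. p \<ge> M \<Longrightarrow> q \<ge> M \<Longrightarrow> dist (g p x) (g q x) < 1 / real (Suc m)"
        unfolding Cauchy_def by blast
      have "x \<in> Ob m M" using x by auto
      then obtain p q where "p \<ge> M" "q \<ge> M" "1 / real (Suc m) < \<bar>g p x - g q x\<bar>" unfolding Ob_def by auto
      then show False using M[of p q] by (simp add: dist_real_def)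
    qed
  qed
  have Olim: "(\<lambda>n. emeasure lebesgue (Ob m n)) \<longlonglongrightarrow> 0" for m
  proof -
    have "(\<lambda>n. emeasure lebesgue (Ob m n)) \<longlonglongrightarrow> emeasure lebesgue (\<Inter>n. Ob m n)"
      by (rule Lim_emeasure_decseq) (use Om Ofin in \<open>auto intro!: antimonoI decseq_SucI Odec\<close>)
    moreover have "emeasure lebesgue (\<Inter>n. Ob m n) = 0"
    proof -
      have "(\<Inter>n. Ob m n) \<in> sets lebesgue" using Om by (intro sets.countable_INT') auto
      then have "emeasure lebesgue (\<Inter>n. Ob m n) \<le> emeasure lebesgue N"
        using Ointer Nnull by (intro emeasure_mono) auto
      then show ?thesis using null_setsD1[OF Nnull] by simp
    qed
    ultimately show ?thesis by simp
  qed
  have "\<forall>m. \<exists>n. emeasure lebesgue (Ob m n) < ennreal (\<eta>/4 * (1/2)^m)"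
  proof
    fix m
    have "0 < ennreal (\<eta>/4 * (1/2)^m)" using \<eta> by simp
    from order_tendstoD(2)[OF Olim this] show "\<exists>n. emeasure lebesgue (Ob m n) < ennreal (\<eta>/4 * (1/2)^m)"
      by (auto simp: eventually_sequentially)
  qed
  then obtain nm where nm: "\<And>m. emeasure lebesgue (Ob m (nm m)) < ennreal (\<eta>/4 * (1/2)^m)" by metis
  define U where "U = (G \<inter> box a b) \<union> (\<Union>m. Ob m (nm m))"
  have Uopen: "open U" unfolding U_def using G(1) Oopen by auto
  have Um: "U \<in> sets lebesgue" using Uopen by simp
  have Usub: "U \<subseteq> cbox a b" unfolding U_def Ob_def using box_subset_cbox by auto
  have sumO: "(\<Sum>m. emeasure lebesgue (Ob m (nm m))) \<le> ennreal (\<eta>/2)"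
  proof -
    have "(\<Sum>m. emeasure lebesgue (Ob m (nm m))) \<le> (\<Sum>m. ennreal (\<eta>/4 * (1/2)^m))"
      by (intro suminf_le less_imp_le nm) auto
    also have "\<dots> = ennreal (\<Sum>m. \<eta>/4 * (1/2)^m)"
      using \<eta> by (intro suminf_ennreal2) (auto intro!: summable_mult summable_geometric)
    also have "(\<Sum>m. \<eta>/4 * (1/2::real)^m) = \<eta>/2"
      by (subst suminf_mult) (auto simp: suminf_geometric summable_geometric)
    finally show ?thesis .
  qed
  have eU: "emeasure lebesgue U \<le> ennreal (3/4 * \<eta>)"
  proof -
    have "emeasure lebesgue U \<le> emeasure lebesgue (G \<inter> box a b) + emeasure lebesgue (\<Union>m. Ob m (nm m))"
      unfolding U_def by (rule emeasure_subadditive) (use Gm Om in auto)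
    also have "emeasure lebesgue (\<Union>m. Ob m (nm m)) \<le> (\<Sum>m. emeasure lebesgue (Ob m (nm m)))"
      by (rule emeasure_subadditive_countably) (use Om in auto)
    also have "emeasure lebesgue (G \<inter> box a b) + (\<Sum>m. emeasure lebesgue (Ob m (nm m))) \<le> ennreal (\<eta>/4) + ennreal (\<eta>/2)"
      by (intro add_mono eG sumO)
    also have "\<dots> = ennreal (3/4 * \<eta>)" using \<eta> by (simp add: ennreal_plus[symmetric] del: ennreal_plus)
    finally show ?thesis by simp
  qed
  have "hcontent (real CARD('n)) U \<le> ennreal Kc * emeasure lebesgue U"
    unfolding Kc_def by (rule hc_le_lebesgue[OF Um Usub ab l])
  also have "\<dots> \<le> ennreal Kc * ennreal (3/4 * \<eta>)" by (intro mult_left_mono eU) auto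
  also have "\<dots> = ennreal (3/4 * \<epsilon>)" using Kc \<eta> unfolding \<eta>_def by (simp add: ennreal_mult[symmetric])
  also have "\<dots> < ennreal \<epsilon>" using \<epsilon> by (simp add: ennreal_less_iff)
  finally have hcU: "hcontent (real CARD('n)) U < ennreal \<epsilon>" .
  have cont: "continuous_on (Q - U) F"
  proof (rule uniform_limit_theorem)
    show "\<forall>\<^sub>F n in sequentially. continuous_on (Q - U) (g n)"
      by (intro always_eventually allI continuous_on_subset[OF gc]) simp
    show "sequentially \<noteq> bot" by simp
    show "uniform_limit (Q - U) g F sequentially"
      unfolding uniform_limit_iff
    proof (intro allI impI)
      fix e :: real assume e: "0 < e"
      obtain m where m: "inverse (real (Suc m)) < e" using reals_Archimedean[OF e] by auto
      show "\<forall>\<^sub>F n in sequentially. \<forall>x\<in>Q - U. dist (g n x) (F x) < e"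
        unfolding eventually_sequentially
      proof (intro exI[of _ "nm m"] allI impI ballI)
        fix n x assume n: "nm m \<le> n" and x: "x \<in> Q - U"
        have xb: "x \<in> box a b" using x Q by blast
        have "x \<notin> U" using x by simp
        then have "x \<notin> G" using xb unfolding U_def by simp
        then have xN: "x \<notin> N" using G(2) by auto
        have xO: "x \<notin> Ob m (nm m)" using \<open>x \<notin> U\<close> unfolding U_def by simp
        have bnd: "\<bar>g p x - g q x\<bar> \<le> 1 / real (Suc m)" if "p \<ge> nm m" "q \<ge> nm m" for p q
          using xO xb that unfolding Ob_def by force
        have "(\<lambda>q. \<bar>g n x - g q x\<bar>) \<longlonglongrightarrow> \<bar>g n x - F x\<bar>"
          by (intro tendsto_rabs tendsto_diff tendsto_const lim[OF xN])
        then have "\<bar>g n x - F x\<bar> \<le> 1 / real (Suc m)"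
          by (rule LIMSEQ_le_const2) (use bnd n in blast)
        also have "\<dots> < e" using m by (simp add: inverse_eq_divide)
        finally show "dist (g n x) (F x) < e" by (simp add: dist_real_def)
      qed
    qed
  qed
  show "\<exists>U. open U \<and> hcontent (real CARD('n)) U < ennreal \<epsilon> \<and> continuous_on (Q - U) F"
    by (intro exI[of _ U] conjI Uopen hcU cont)
qed



lemma qc_cong:
  assumes "\<And>x. x \<in> A \<Longrightarrow> f x = g x" "hc_quasicontinuous_on \<beta> A f"
  shows "hc_quasicontinuous_on \<beta> A g"
  using assms unfolding hc_quasicontinuous_on_def
  by (metis (no_types, lifting) DiffD1 continuous_on_cong)

lemma subcube_in_subcubes: "(c, r) \<in> subcube_data Q0 \<Longrightarrow> cube c r \<in> subcubes Q0"
  unfolding subcubes_def by force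

lemma set_integrable_meas:
  fixes v :: "'a \<Rightarrow> real"
  shows "set_integrable M Q v \<Longrightarrow> (\<lambda>x. indicator Q x * v x) \<in> borel_measurable M"
  unfolding set_integrable_def by (drule borel_measurable_integrable) simp

lemma set_integral_nn_eq:
  fixes v :: "'a \<Rightarrow> real"
  assumes int: "set_integrable M Q v" and Q: "Q \<in> sets M" and fin: "emeasure M Q < \<infinity>"
  shows "(\<integral>\<^sup>+x. indicator Q x * ennreal \<bar>indicator Q x * v x - indicator Q x * c\<bar> \<partial>M)
      = ennreal (LINT x:Q|M. \<bar>v x - c\<bar>)"
proof -
  have ic: "set_integrable M Q (\<lambda>x. \<bar>v x - c\<bar>)"
    by (intro set_integrable_abs set_integral_diff(1) int set_integrable_const'[OF Q fin])
  have "ennreal (LINT x:Q|M. \<bar>v x - c\<bar>) = (\<integral>\<^sup>+x. ennreal (indicator Q x *\<^sub>R \<bar>v x - c\<bar>) \<partial>M)"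
    unfolding set_lebesgue_integral_def
    using ic unfolding set_integrable_def by (intro nn_integral_eq_integral[symmetric]) auto
  also have "\<dots> = (\<integral>\<^sup>+x. indicator Q x * ennreal \<bar>indicator Q x * v x - indicator Q x * c\<bar> \<partial>M)"
    by (intro nn_integral_cong) (auto simp: indicator_def)
  finally show ?thesis by simp
qed

lemma content_le_classical:
  fixes v :: "real^'n \<Rightarrow> real"
  assumes int: "\<And>Q. Q \<in> subcubes Q0 \<Longrightarrow> set_integrable lebesgue Q v"
  shows "bmo_content_norm (real CARD('n)) Q0 v \<le>
    ennreal (omega (real CARD('n)) * (2 * real CARD('n)) ^ CARD('n)) * bmo_norm lebesgue (subcubes Q0) v"
  unfolding bmo_content_norm_def
proof (rule SUP_least)
  define Kc where "Kc = omega (real CARD('n)) * (2 * real CARD('n)) ^ CARD('n)"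
  fix p assume p: "p \<in> subcube_data Q0"
  obtain c r where pcr: "p = (c, r)" by fastforce
  have r: "0 < r" and sub: "cube c r \<subseteq> Q0" using p pcr unfolding subcube_data_def by auto
  define Q where "Q = cube c r"
  have QS: "Q \<in> subcubes Q0" unfolding Q_def using p pcr by (simp add: subcube_in_subcubes)
  have iQ: "set_integrable lebesgue Q v" by (rule int[OF QS])
  have Qm: "Q \<in> sets lebesgue" unfolding Q_def cube_cbox by simp
  have Ql: "Q \<in> sets lborel" unfolding Q_def cube_cbox by simp
  have eQ: "emeasure lebesgue Q = ennreal (r ^ CARD('n))"
    using Ql leb_cube[OF r, of c] unfolding Q_def by simp
  have finQ: "emeasure lebesgue Q < \<infinity>" using eQ by simp
  have mQ: "measure lebesgue Q = r ^ CARD('n)" using eQ r by (simp add: measure_def)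
  define avg where "avg = (LINT y:Q|lebesgue. v y) / measure lebesgue Q"
  define osc where "osc = (LINT x:Q|lebesgue. \<bar>v x - avg\<bar>)"
  define f where "f x = \<bar>indicator Q x * v x - indicator Q x * avg\<bar>" for x
  have hv: "(\<lambda>x. indicator Q x * v x) \<in> borel_measurable lebesgue" by (rule set_integrable_meas[OF iQ])
  have fm: "f \<in> borel_measurable lebesgue"
    unfolding f_def using Qm
    by (intro borel_measurable_abs borel_measurable_diff hv borel_measurable_times borel_measurable_const borel_measurable_indicator)
  have "choquet (real CARD('n)) Q (\<lambda>x. \<bar>v x - avg\<bar>) = choquet (real CARD('n)) Q f"
    by (rule choquet_cong) (simp add: f_def)
  also have "\<dots> \<le> ennreal Kc * (\<integral>\<^sup>+x. indicator Q x * ennreal (f x) \<partial>lebesgue)"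
    unfolding Q_def cube_cbox Kc_def by (rule choquet_upper[OF _ r]) (auto simp: fm[unfolded Q_def cube_cbox] f_def)
  also have "(\<integral>\<^sup>+x. indicator Q x * ennreal (f x) \<partial>lebesgue) = ennreal osc"
    unfolding f_def osc_def by (rule set_integral_nn_eq[OF iQ Qm finQ])
  finally have ch: "choquet (real CARD('n)) Q (\<lambda>x. \<bar>v x - avg\<bar>) \<le> ennreal Kc * ennreal osc" .
  have "(INF c'. ennreal (snd p powr - real CARD('n)) * choquet (real CARD('n)) (cube (fst p) (snd p)) (\<lambda>x. \<bar>v x - c'\<bar>))
     \<le> ennreal (r powr - real CARD('n)) * choquet (real CARD('n)) Q (\<lambda>x. \<bar>v x - avg\<bar>)"
    unfolding pcr Q_def fst_conv snd_conv by (rule INF_lower2[where i=avg]) simp_all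
  also have "\<dots> \<le> ennreal (r powr - real CARD('n)) * (ennreal Kc * ennreal osc)"
    by (intro mult_left_mono ch) simp
  also have "\<dots> = ennreal Kc * ennreal (osc / measure lebesgue Q)"
  proof -
    have o0: "0 \<le> osc" unfolding osc_def set_lebesgue_integral_def
      by (intro integral_nonneg_AE) (auto simp: indicator_def)
    have "r powr - real CARD('n) = 1 / r ^ CARD('n)"
      using r by (simp add: powr_minus powr_realpow divide_inverse)
    then have "ennreal (r powr - real CARD('n)) * (ennreal Kc * ennreal osc) =
        ennreal Kc * (ennreal (1 / r ^ CARD('n)) * ennreal osc)" by (simp add: mult_ac)
    also have "ennreal (1 / r ^ CARD('n)) * ennreal osc = ennreal (osc / measure lebesgue Q)"
      using r o0 mQ by (simp add: ennreal_mult[symmetric])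
    finally show ?thesis .
  qed
  also have "\<dots> \<le> ennreal Kc * bmo_norm lebesgue (subcubes Q0) v"
  proof (intro mult_left_mono)
    show "ennreal (osc / measure lebesgue Q) \<le> bmo_norm lebesgue (subcubes Q0) v"
      unfolding bmo_norm_def osc_def avg_def by (rule SUP_upper2[OF QS]) simp
  qed simp
  finally show "(INF c'. ennreal (snd p powr - real CARD('n)) * choquet (real CARD('n)) (cube (fst p) (snd p)) (\<lambda>x. \<bar>v x - c'\<bar>))
     \<le> ennreal (omega (real CARD('n)) * (2 * real CARD('n)) ^ CARD('n)) * bmo_norm lebesgue (subcubes Q0) v"
    unfolding Kc_def .
qed



lemma plane_cube_in_cube:
  fixes S :: "'n::finite set" and c a0 :: "real^'n"
  assumes S: "S \<noteq> {}" and r: "0 < r" and sub: "plane_cube S c r \<subseteq> cube a0 l0"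
  obtains c' where "plane_cube S c r \<subseteq> cube c' r" "cube c' r \<subseteq> cube a0 l0"
proof -
  have cin: "c \<in> plane_cube S c r" using r unfolding plane_cube_def by auto
  define z where "z = (\<chi> j. if j \<in> S then c$j + r else c$j)"
  have zin: "z \<in> plane_cube S c r" using r unfolding plane_cube_def z_def by auto
  have c0: "a0$i \<le> c$i \<and> c$i \<le> a0$i + l0" for i using sub cin unfolding cube_def by auto
  have z0: "a0$i \<le> z$i \<and> z$i \<le> a0$i + l0" for i using sub zin unfolding cube_def by blast
  obtain i0 where "i0 \<in> S" using S by auto
  then have rl: "r \<le> l0" using c0[of i0] z0[of i0] unfolding z_def by auto
  define c' where "c' = (\<chi> j. if j \<in> S then c$j else min (c$j) (a0$j + l0 - r))"
  have 1: "plane_cube S c r \<subseteq> cube c' r"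
  proof
    fix x assume x: "x \<in> plane_cube S c r"
    have "c'$i \<le> x$i \<and> x$i \<le> c'$i + r" for i
      using x c0[of i] r unfolding plane_cube_def c'_def by (cases "i \<in> S") (auto simp: min_def)
    then show "x \<in> cube c' r" unfolding cube_def by auto
  qed
  have 2: "cube c' r \<subseteq> cube a0 l0"
  proof
    fix x assume x: "x \<in> cube c' r"
    have "a0$i \<le> x$i \<and> x$i \<le> a0$i + l0" for i
    proof (cases "i \<in> S")
      case True
      have e: "c'$i = c$i" "z$i = c$i + r" using True by (simp_all add: c'_def z_def)
      have "c'$i \<le> x$i" "x$i \<le> c'$i + r" using x by (auto simp: cube_def)
      then show ?thesis using c0[of i] z0[of i] e by auto
    next
      case False
      have "c'$i \<le> x$i" "x$i \<le> c'$i + r" using x unfolding cube_def by auto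
      moreover have "c'$i = min (c$i) (a0$i + l0 - r)" using False unfolding c'_def by simp
      ultimately show ?thesis using c0[of i] rl by (auto simp: min_def split: if_splits)
    qed
    then show "x \<in> cube a0 l0" unfolding cube_def by auto
  qed
  show ?thesis using 1 2 that by blast
qed

theorem theorem1p2:
  fixes a0 :: "real^'n" and l0 :: real and k :: nat
  assumes "0 < l0" and "1 \<le> k" and "k \<le> CARD('n)"
  shows "\<exists>C>0.
    (\<forall>u \<in> BMO_content (real k) (cube a0 l0). \<forall>S a. card S = k \<longrightarrow>
        u \<in> BMO_classical (plane_measure S a) (plane_cubes S a (cube a0 l0)) \<and>
        bmo_norm (plane_measure S a) (plane_cubes S a (cube a0 l0)) u
          \<le> ennreal C * bmo_content_norm (real k) (cube a0 l0) u) \<and>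
    (k = CARD('n) \<longrightarrow>
       (\<forall>u \<in> BMO_content (real k) (cube a0 l0).
          u \<in> BMO_classical lebesgue (subcubes (cube a0 l0)) \<and>
          ennreal (1 / C) * bmo_content_norm (real k) (cube a0 l0) u
            \<le> bmo_norm lebesgue (subcubes (cube a0 l0)) u \<and>
          bmo_norm lebesgue (subcubes (cube a0 l0)) u
            \<le> ennreal C * bmo_content_norm (real k) (cube a0 l0) u) \<and>
       (\<forall>v \<in> BMO_classical lebesgue (subcubes (cube a0 l0)).
          \<exists>u \<in> BMO_content (real k) (cube a0 l0).
            AE x in lebesgue. x \<in> cube a0 l0 \<longrightarrow> u x = v x))"
proof -
  note l0 = assms(1) and k1 = assms(2)
  have k0: "0 < k" using k1 by simp
  define Q0 where "Q0 = cube a0 l0"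
  define KP where "KP = 2^k / omega (real k)"
  define Kc where "Kc = omega (real CARD('n)) * (2 * real CARD('n)) ^ CARD('n)"
  define C where "C = max (2 * KP) (max 2 Kc)"
  have KP: "0 < KP" unfolding KP_def using k0 by (intro divide_pos_pos omega_pos) auto
  have Kc: "0 < Kc" unfolding Kc_def by (intro mult_pos_pos omega_pos) auto
  have C: "0 < C" "2 * KP \<le> C" "2 \<le> C" "Kc \<le> C" unfolding C_def using KP by auto
  have part1: "\<forall>u \<in> BMO_content (real k) Q0. \<forall>S a. card S = k \<longrightarrow>
        u \<in> BMO_classical (plane_measure S a) (plane_cubes S a Q0) \<and>
        bmo_norm (plane_measure S a) (plane_cubes S a Q0) u
          \<le> ennreal C * bmo_content_norm (real k) Q0 u"
  proof (intro ballI allI impI)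
    fix u assume u: "u \<in> BMO_content (real k) Q0"
    fix S :: "'n set" and a :: "real^'n" assume S: "card S = k"
    have Sne: "S \<noteq> {}" using S k0 by auto
    define N where "N = distr (Pi\<^sub>M S (\<lambda>_. lborel)) borel (emb S a)"
    have PM: "plane_measure S a = completion N" unfolding N_def by (rule plane_measure_eq)
    have Ns: "sets N = sets borel" unfolding N_def by simp
    have ball: "\<And>x r. 0 \<le> r \<Longrightarrow> emeasure N (ball x r) \<le> ennreal KP * ennreal (omega (real k) * r powr real k)"
      unfolding N_def KP_def by (rule plane_ball[OF _ S k0])
    have Nrm: "bmo_content_norm (real k) Q0 u < top" using u unfolding BMO_content_def by auto
    have each: "set_integrable (plane_measure S a) Q' u \<and>
        ennreal ((LINT x:Q'|plane_measure S a. \<bar>u x - (LINT y:Q'|plane_measure S a. u y) / measure (plane_measure S a) Q'\<bar>)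
       / measure (plane_measure S a) Q') \<le> ennreal (2*KP) * bmo_content_norm (real k) Q0 u"
      if Q': "Q' \<in> plane_cubes S a Q0" for Q'
    proof -
      obtain c r where cr: "Q' = plane_cube S c r" "0 < r" "\<And>i. i \<notin> S \<Longrightarrow> c$i = a$i" "plane_cube S c r \<subseteq> Q0"
        using Q' unfolding plane_cubes_def by blast
      obtain c' where c': "plane_cube S c r \<subseteq> cube c' r" "cube c' r \<subseteq> cube a0 l0"
        using plane_cube_in_cube[OF Sne cr(2), of c a0 l0] cr(4) unfolding Q0_def by blast
      have cl: "closed Q'" unfolding cr(1) plane_cube_cbox[OF less_imp_le[OF cr(2)]] by (rule closed_cbox)
      have em: "emeasure N Q' = ennreal (r powr real k)"
        unfolding N_def cr(1) using plane_cube_measure[OF cr(2) S cr(3)] cr(2) by (simp add: powr_realpow)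
      show ?thesis unfolding PM
        by (rule bmo_trace_abstract[OF Ns KP ball u cl _ _ cr(2) em]) (use c' cr(1) Q0_def in auto)
    qed
    have bn: "bmo_norm (plane_measure S a) (plane_cubes S a Q0) u \<le> ennreal (2*KP) * bmo_content_norm (real k) Q0 u"
      unfolding bmo_norm_def using each by (intro SUP_least) auto
    also have "\<dots> \<le> ennreal C * bmo_content_norm (real k) Q0 u"
      using C by (intro mult_right_mono ennreal_leI) auto
    finally have bn2: "bmo_norm (plane_measure S a) (plane_cubes S a Q0) u \<le> ennreal C * bmo_content_norm (real k) Q0 u" .
    have "bmo_norm (plane_measure S a) (plane_cubes S a Q0) u < top"
      using bn Nrm by (metis ennreal_mult_less_top ennreal_less_top order.strict_trans1)
    then show "u \<in> BMO_classical (plane_measure S a) (plane_cubes S a Q0) \<and>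
        bmo_norm (plane_measure S a) (plane_cubes S a Q0) u \<le> ennreal C * bmo_content_norm (real k) Q0 u"
      using each bn2 unfolding BMO_classical_def by auto
  qed
  have part2: "k = CARD('n) \<longrightarrow>
       (\<forall>u \<in> BMO_content (real k) Q0.
          u \<in> BMO_classical lebesgue (subcubes Q0) \<and>
          ennreal (1 / C) * bmo_content_norm (real k) Q0 u \<le> bmo_norm lebesgue (subcubes Q0) u \<and>
          bmo_norm lebesgue (subcubes Q0) u \<le> ennreal C * bmo_content_norm (real k) Q0 u) \<and>
       (\<forall>v \<in> BMO_classical lebesgue (subcubes Q0).
          \<exists>u \<in> BMO_content (real k) Q0. AE x in lebesgue. x \<in> Q0 \<longrightarrow> u x = v x)"
  proof
    assume kd: "k = CARD('n)"
    have ball: "\<And>x r. 0 \<le> r \<Longrightarrow> emeasure lborel (ball (x::real^'n) r) \<le> ennreal 1 * ennreal (omega (real k) * r powr real k)"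
      unfolding kd by (rule leb_ball)
    have Ls: "sets lborel = sets (borel :: (real^'n) measure)" by simp
    show "(\<forall>u \<in> BMO_content (real k) Q0.
          u \<in> BMO_classical lebesgue (subcubes Q0) \<and>
          ennreal (1 / C) * bmo_content_norm (real k) Q0 u \<le> bmo_norm lebesgue (subcubes Q0) u \<and>
          bmo_norm lebesgue (subcubes Q0) u \<le> ennreal C * bmo_content_norm (real k) Q0 u) \<and>
       (\<forall>v \<in> BMO_classical lebesgue (subcubes Q0).
          \<exists>u \<in> BMO_content (real k) Q0. AE x in lebesgue. x \<in> Q0 \<longrightarrow> u x = v x)"
    proof (intro conjI ballI)
      fix u assume u: "u \<in> BMO_content (real k) Q0"
      have Nrm: "bmo_content_norm (real k) Q0 u < top" using u unfolding BMO_content_def by auto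
      have each: "set_integrable lebesgue Q u \<and>
        ennreal ((LINT x:Q|lebesgue. \<bar>u x - (LINT y:Q|lebesgue. u y) / measure lebesgue Q\<bar>)
       / measure lebesgue Q) \<le> ennreal (2*1) * bmo_content_norm (real k) Q0 u"
        if Q: "Q \<in> subcubes Q0" for Q
      proof -
        obtain c r where cr: "Q = cube c r" "0 < r" "cube c r \<subseteq> Q0"
          using Q unfolding subcubes_def subcube_data_def by auto
        have cl: "closed Q" unfolding cr(1) cube_cbox by (rule closed_cbox)
        have em: "emeasure lborel Q = ennreal (r powr real k)"
          unfolding cr(1) using leb_cube[OF cr(2), of c] cr(2) kd by (simp add: powr_realpow)
        show ?thesis
          by (rule bmo_trace_abstract[OF Ls _ ball u cl _ cr(3) cr(2) em]) (use cr(1) in auto)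
      qed
      have bn: "bmo_norm lebesgue (subcubes Q0) u \<le> ennreal (2*1) * bmo_content_norm (real k) Q0 u"
        unfolding bmo_norm_def using each by (intro SUP_least) auto
      also have "\<dots> \<le> ennreal C * bmo_content_norm (real k) Q0 u"
        using C by (intro mult_right_mono ennreal_leI) auto
      finally have bn2: "bmo_norm lebesgue (subcubes Q0) u \<le> ennreal C * bmo_content_norm (real k) Q0 u" .
      have "bmo_norm lebesgue (subcubes Q0) u < top"
        using bn Nrm by (metis ennreal_mult_less_top ennreal_less_top order.strict_trans1)
      then show "u \<in> BMO_classical lebesgue (subcubes Q0)"
        using each unfolding BMO_classical_def by auto
      show "bmo_norm lebesgue (subcubes Q0) u \<le> ennreal C * bmo_content_norm (real k) Q0 u" by (rule bn2)
      have "bmo_content_norm (real k) Q0 u \<le> ennreal Kc * bmo_norm lebesgue (subcubes Q0) u"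
        unfolding kd Kc_def using each by (intro content_le_classical) auto
      then have "ennreal (1 / C) * bmo_content_norm (real k) Q0 u \<le> ennreal (1 / C) * (ennreal Kc * bmo_norm lebesgue (subcubes Q0) u)"
        by (rule mult_left_mono) simp
      also have "\<dots> = ennreal (Kc / C) * bmo_norm lebesgue (subcubes Q0) u"
        using C Kc by (simp add: mult.assoc[symmetric] ennreal_mult[symmetric])
      also have "\<dots> \<le> 1 * bmo_norm lebesgue (subcubes Q0) u"
        using C Kc by (intro mult_right_mono) (auto simp: ennreal_le_1)
      finally show "ennreal (1 / C) * bmo_content_norm (real k) Q0 u \<le> bmo_norm lebesgue (subcubes Q0) u" by simp
    next
      fix v assume v: "v \<in> BMO_classical lebesgue (subcubes Q0)"
      have int: "\<And>Q. Q \<in> subcubes Q0 \<Longrightarrow> set_integrable lebesgue Q v"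
        and bfin: "bmo_norm lebesgue (subcubes Q0) v < top"
        using v unfolding BMO_classical_def by auto
      have Q0S: "Q0 \<in> subcubes Q0" unfolding Q0_def using l0
        by (intro subcube_in_subcubes) (simp add: subcube_data_def)
      have iQ0: "set_integrable lebesgue Q0 v" by (rule int[OF Q0S])
      define F where "F x = indicator Q0 x * v x" for x
      have Fm: "F \<in> borel_measurable lebesgue" unfolding F_def by (rule set_integrable_meas[OF iQ0])
      define a where "a = (\<chi> i. a0$i - 1)"
      define b where "b = (\<chi> i. a0$i + l0 + 1)"
      have Qbox: "Q0 \<subseteq> box a b"
      proof
        fix x assume x: "x \<in> Q0"
        have "a0$i - 1 < x$i \<and> x$i < a0$i + l0 + 1" for i
        proof -
          have "a0$i \<le> x$i \<and> x$i \<le> a0$i + l0" using x unfolding Q0_def cube_def by blast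
          then show ?thesis by linarith
        qed
        then show "x \<in> box a b" unfolding a_def b_def by (simp add: mem_box_cart)
      qed
      have ab: "\<And>i. b$i - a$i = l0 + 2" unfolding a_def b_def by simp
      have qcF: "hc_quasicontinuous_on (real CARD('n)) Q0 F"
        by (rule lusin_qc[OF Fm Qbox ab]) (use l0 in simp)
      have qc: "hc_quasicontinuous_on (real k) Q0 v"
        unfolding kd by (rule qc_cong[OF _ qcF]) (simp add: F_def)
      have Q0c: "Q0 = cbox a0 (\<chi> i. a0$i + l0)" unfolding Q0_def by (rule cube_cbox)
      have intfin: "(\<integral>\<^sup>+x. indicator (cbox a0 (\<chi> i. a0$i + l0)) x * ennreal \<bar>F x\<bar> \<partial>lebesgue) < \<infinity>"
      proof -
        have "(\<integral>\<^sup>+x. indicator (cbox a0 (\<chi> i. a0$i + l0)) x * ennreal \<bar>F x\<bar> \<partial>lebesgue)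
            = (\<integral>\<^sup>+x. ennreal (norm (indicator Q0 x *\<^sub>R v x)) \<partial>lebesgue)"
          unfolding Q0c[symmetric] by (intro nn_integral_cong) (auto simp: F_def indicator_def)
        also have "\<dots> < \<infinity>" using iQ0 unfolding set_integrable_def by (simp add: integrable_iff_bounded)
        finally show ?thesis .
      qed
      have "choquet (real k) Q0 (\<lambda>x. \<bar>v x\<bar>) = choquet (real CARD('n)) (cbox a0 (\<chi> i. a0$i + l0)) (\<lambda>x. \<bar>F x\<bar>)"
        unfolding kd Q0c[symmetric] by (rule choquet_cong) (simp add: F_def)
      also have "\<dots> \<le> ennreal Kc * (\<integral>\<^sup>+x. indicator (cbox a0 (\<chi> i. a0$i + l0)) x * ennreal \<bar>F x\<bar> \<partial>lebesgue)"
        unfolding Kc_def by (rule choquet_upper[OF _ l0]) (use Fm in auto)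
      finally have ch: "choquet (real k) Q0 (\<lambda>x. \<bar>v x\<bar>) < top"
        using intfin by (simp add: ennreal_mult_less_top le_less_trans)
      have "bmo_content_norm (real k) Q0 v \<le> ennreal Kc * bmo_norm lebesgue (subcubes Q0) v"
        unfolding kd Kc_def using int by (rule content_le_classical)
      also have "\<dots> < top" using bfin by (simp add: ennreal_mult_less_top)
      finally have bc: "bmo_content_norm (real k) Q0 v < top" .
      have "v \<in> BMO_content (real k) Q0"
        unfolding BMO_content_def L1_content_def using qc ch bc by auto
      then show "\<exists>u \<in> BMO_content (real k) Q0. AE x in lebesgue. x \<in> Q0 \<longrightarrow> u x = v x" by auto
    qed
  qed
  show ?thesis
    using C(1) part1 part2 unfolding Q0_def by blast
qed


end
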